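(* Let $p$ be a prime and $G=\mathbb{Z}\times\mathbb{Z}_p=\langle z\rangle\times\langle a\rangle$. Let $\mathcal{S}$ be a Schur ring over $G$ such that $\varphi(\mathcal{S})=F[\mathbb{Z}]^{\pm}$. If there is an $\mathcal{S}$-class $C$ with $|C|=2$ and $C\subseteq z\mathbb{Z}_p\cup z^{-1}\mathbb{Z}_p$, then $\mathcal{S}$ is an automorphic Schur ring.
   Context: $F$ is a field of characteristic $0$; $\mathbb{Z}=\langle z\rangle$ infinite cyclic, $\mathbb{Z}_p=\langle a\rangle$ cyclic of order $p$, written multiplicatively. For finite $C\subseteq G$, $\overline{C}=\sum_{g\in C}g$ and $C^*=\{g^{-1}:g\in C\}$. A Schur ring over $G$ is a subspace $\mathcal{S}=\mathrm{Span}_F\{\overline{C}:C\in\mathcal{D}\}$ of $F[G]$, where $\mathcal{D}=\mathcal{D}(\mathcal{S})$ is a partition of $G$ into finite subsets with $\{1\}\in\mathcal{D}$, $C\in\mathcal{D}\Rightarrow C^*\in\mathcal{D}$, and each $\overline{C}\,\overline{D}$ a finite $F$-linear combination of the $\overline{E}$, $E\in\mathcal{D}$; members of $\mathcal{D}$ are $\mathcal{S}$-classes. $\varphi:G\to\mathbb{Z}$ is the projection with kernel $\mathbb{Z}_p$, extended linearly to group algebras; $\varphi(\mathcal{S})$ is a Schur ring over $\mathbb{Z}$ with classes $\varphi(C)$, $C\in\mathcal{D}(\mathcal{S})$. $F[\mathbb{Z}]^{\pm}$ is the symmetric Schur ring over $\mathbb{Z}$, with classes $\{z^t,z^{-t}\}$,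 $t\in\mathbb{Z}$. $\mathcal{S}$ is automorphic if $\mathcal{S}=F[G]^{\mathcal{H}}$ (elements fixed by $\mathcal{H}$; classes are the $\mathcal{H}$-orbits) for some finite $\mathcal{H}\le\operatorname{Aut}(G)$. *)

theory Defs
  imports "HOL-Algebra.Bij" "HOL-Computational_Algebra.Primes"
begin

text \<open>The group G = Z x Z_p, written as pairs (t, i) with t :: int the exponent of z
  and i \<in> {0..<p} the exponent of a; the group law is componentwise addition, mod p in
  the second component.\<close>

definition Gc :: "nat \<Rightarrow> (int \<times> int) set" where
  "Gc p = UNIV \<times> {0..<int p}"

definition gmult :: "nat \<Rightarrow> int \<times> int \<Rightarrow> int \<times> int \<Rightarrow> int \<times> int" where
  "gmult p x y = (fst x + fst y, (snd x + snd y) mod int p)"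

definition ginv :: "nat \<Rightarrow> int \<times> int \<Rightarrow> int \<times> int" where
  "ginv p x = (- fst x, (- snd x) mod int p)"

definition Grp :: "nat \<Rightarrow> (int \<times> int) monoid" where
  "Grp p = \<lparr>carrier = Gc p, monoid.mult = gmult p, one = (0, 0)\<rparr>"

text \<open>The group algebra F[G]: finitely supported functions G \<rightarrow> F (zero outside G).\<close>

definition grpalg :: "'a itself \<Rightarrow> nat \<Rightarrow> (int \<times> int \<Rightarrow> 'a::field) set" where
  "grpalg F p = {f. finite {x. f x \<noteq> 0} \<and> {x. f x \<noteq> 0} \<subseteq> Gc p}"

definition conv :: "nat \<Rightarrow> (int \<times> int \<Rightarrow> 'a::field) \<Rightarrow> (int \<times> int \<Rightarrow> 'a) \<Rightarrow> int \<times> int \<Rightarrow> 'a" where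
  "conv p f g = (\<lambda>x. if x \<in> Gc p then (\<Sum>y\<in>{y. f y \<noteq> 0}. f y * g (gmult p (ginv p y) x)) else 0)"

text \<open>The element \<open>\<overline>C\<close> of F[G] for a finite subset C.\<close>

definition clsum :: "'a itself \<Rightarrow> (int \<times> int) set \<Rightarrow> (int \<times> int \<Rightarrow> 'a::field)" where
  "clsum F C = (\<lambda>x. if x \<in> C then 1 else 0)"

definition cspan :: "'a itself \<Rightarrow> (int \<times> int) set set \<Rightarrow> (int \<times> int \<Rightarrow> 'a::field) set" where
  "cspan F D = {f. \<exists>Es c. finite Es \<and> Es \<subseteq> D \<and>
       f = (\<lambda>x. \<Sum>E\<in>Es. c E * clsum F E x)}"

definition schur_classes :: "'a::field itself \<Rightarrow> nat \<Rightarrow> (int \<times> int) set set \<Rightarrow> bool" where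
  "schur_classes F p D \<longleftrightarrow>
     (\<forall>C\<in>D. finite C \<and> C \<noteq> {}) \<and>
     (\<forall>C\<in>D. \<forall>C'\<in>D. C \<noteq> C' \<longrightarrow> C \<inter> C' = {}) \<and>
     \<Union>D = Gc p \<and>
     {(0, 0)} \<in> D \<and>
     (\<forall>C\<in>D. ginv p ` C \<in> D) \<and>
     (\<forall>C\<in>D. \<forall>C'\<in>D. conv p (clsum F C) (clsum F C') \<in> cspan F D)"

text \<open>Classes of \<phi>(S): images of the S-classes under the projection G \<rightarrow> Z.\<close>

definition phi_classes :: "(int \<times> int) set set \<Rightarrow> int set set" where
  "phi_classes D = (\<lambda>C. fst ` C) ` D"

text \<open>Classes of the symmetric Schur ring F[Z]^\<pm>.\<close>

definition sym_classes :: "int set set" where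
  "sym_classes = {{t, - t} | t. True}"

definition fixed_alg :: "'a::field itself \<Rightarrow> nat \<Rightarrow> (int \<times> int \<Rightarrow> int \<times> int) set
    \<Rightarrow> (int \<times> int \<Rightarrow> 'a) set" where
  "fixed_alg F p H = {f \<in> grpalg F p. \<forall>\<sigma>\<in>H. \<forall>x\<in>Gc p. f (\<sigma> x) = f x}"

definition automorphic :: "'a::field itself \<Rightarrow> nat \<Rightarrow> (int \<times> int) set set \<Rightarrow> bool" where
  "automorphic F p D \<longleftrightarrow>
     (\<exists>H. finite H \<and> subgroup H (AutoGroup (Grp p)) \<and> cspan F D = fixed_alg F p H)"

end

theory Submission
  imports Defs "HOL-Number_Theory.Number_Theory"
begin

lemma gmult_eq: "gmult p x y = (fst x + fst y, (snd x + snd y) mod int p)"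
  by (simp add: gmult_def)

definition dv :: "nat \<Rightarrow> int \<times> int \<Rightarrow> int \<times> int \<Rightarrow> int \<times> int" where
  "dv p y g = (fst g - fst y, (snd g - snd y) mod int p)"

lemma gmult_ginv: "gmult p (ginv p y) g = dv p y g"
  by (simp add: gmult_def ginv_def dv_def mod_add_left_eq)

lemma sum_list_rotate1: "sum_list (rotate1 xs) = sum_list (xs::'b::comm_monoid_add list)"
  by (cases xs) (auto simp: add.commute)

lemma sum_list_rotate: "sum_list (rotate n xs) = sum_list (xs::'b::comm_monoid_add list)"
  by (induction n) (auto simp: sum_list_rotate1)

lemma map_rotate': "map f (rotate n xs) = rotate n (map f xs)"
  by (simp add: rotate_map)

definition prodl :: "nat \<Rightarrow> (int \<times> int) list \<Rightarrow> int \<times> int" where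
  "prodl p xs = (sum_list (map fst xs), sum_list (map snd xs) mod int p)"

lemma prodl_rotate: "prodl p (rotate n xs) = prodl p xs"
  by (simp add: prodl_def rotate_map[symmetric] sum_list_rotate)

definition orb :: "nat \<Rightarrow> 'b list \<Rightarrow> 'b list set" where
  "orb q xs = (\<lambda>k. rotate k xs) ` {..<q}"

lemma rotate1_fix_const:
  assumes "rotate1 xs = xs" "i < length xs"
  shows "xs ! i = xs ! 0"
  using assms(2)
proof (induction i)
  case 0 then show ?case by simp
next
  case (Suc i)
  have "rotate1 xs ! i = xs ! (Suc i mod length xs)" using Suc.prems by (intro nth_rotate1) simp
  then have "xs ! i = xs ! Suc i" using assms(1) Suc.prems by simp
  then show ?case using Suc by simp
qed

lemma rotate_mult_fix:
  assumes "rotate d xs = xs"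
  shows "rotate (a * d) xs = xs"
proof (induction a)
  case 0 then show ?case by simp
next
  case (Suc a)
  have "rotate (Suc a * d) xs = rotate d (rotate (a * d) xs)" by (simp add: rotate_rotate add.commute)
  then show ?case using Suc assms by simp
qed

lemma orb_card:
  assumes q: "prime q" and len: "length xs = q" and nc: "rotate1 xs \<noteq> xs"
  shows "card (orb q xs) = q"
proof -
  have "inj_on (\<lambda>k. rotate k xs) {..<q}"
  proof (rule ccontr)
    assume "\<not> ?thesis"
    then obtain k l where kl: "k < q" "l < q" "k \<noteq> l" "rotate k xs = rotate l xs"
      unfolding inj_on_def by auto
    have gen: "\<exists>d. 0 < d \<and> d < q \<and> rotate d xs = xs" if "k < l" "l < q" "rotate k xs = rotate l xs" for k l
    proof -
      have "rotate (q - k) (rotate k xs) = rotate (q - k + k) xs" by (simp add: rotate_rotate)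
      also have "\<dots> = xs" using that len by simp
      finally have a: "rotate (q - k) (rotate k xs) = xs" .
      have "rotate (q - k) (rotate l xs) = rotate (q - k + l) xs" by (simp add: rotate_rotate)
      also have "\<dots> = rotate ((q - k + l) mod q) xs" using rotate_conv_mod[of "q - k + l" xs] len by simp
      also have "(q - k + l) mod q = l - k"
      proof -
        have "q - k + l = (l - k) + q" using that by simp
        then have "(q - k + l) mod q = (l - k) mod q" by simp
        then show ?thesis using that by simp
      qed
      finally have "rotate (l - k) xs = xs" using a that by simp
      then show ?thesis using that by (intro exI[of _ "l - k"]) auto
    qed
    obtain d where d: "0 < d" "d < q" "rotate d xs = xs"
    proof (cases "k < l")
      case True then show ?thesis using gen[of k l] kl that by blast
    next
      case False then have "l < k" using kl by simp
      have "rotate l xs = rotate k xs" using kl(4) by simp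
      then have "\<exists>d. 0 < d \<and> d < q \<and> rotate d xs = xs" using gen[of l k] kl(1) \<open>l < k\<close> by blast
      then show ?thesis using that by blast
    qed
    have "coprime d q"
    proof -
      have "\<not> q dvd d" using d by (auto dest: dvd_imp_le)
      then show ?thesis using q prime_imp_coprime_nat coprime_commute by blast
    qed
    then obtain a where a: "[d * a = Suc 0] (mod q)" using cong_solve_coprime_nat by blast
    have "rotate (a * d) xs = xs" using rotate_mult_fix[OF d(3)] .
    moreover have "(a * d) mod q = 1 mod q" using a unfolding cong_def by (simp add: mult.commute)
    moreover have "q > 1" using q prime_gt_1_nat by blast
    ultimately have "rotate 1 xs = xs" using len rotate_conv_mod[of "a * d" xs] by simp
    then show False using nc by simp
  qed
  then show ?thesis unfolding orb_def by (simp add: card_image)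
qed

lemma orb_rotate:
  assumes "length xs = q" "q > 0"
  shows "orb q (rotate k xs) = orb q xs"
proof
  show "orb q (rotate k xs) \<subseteq> orb q xs"
  proof
    fix ys assume "ys \<in> orb q (rotate k xs)"
    then obtain j where j: "j < q" "ys = rotate j (rotate k xs)" unfolding orb_def by auto
    then have "ys = rotate ((j + k) mod q) xs" using assms rotate_conv_mod[of "j + k" xs]
      by (simp add: rotate_rotate)
    then show "ys \<in> orb q xs" unfolding orb_def using assms by auto
  qed
next
  show "orb q xs \<subseteq> orb q (rotate k xs)"
  proof
    fix ys assume "ys \<in> orb q xs"
    then obtain j where j: "j < q" "ys = rotate j xs" unfolding orb_def by auto
    define j' where "j' = (j + (q - k mod q)) mod q"
    have "(j' + k) mod q = (j + (q - k mod q) + k) mod q"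
      unfolding j'_def by (simp add: mod_add_left_eq)
    also have "\<dots> = (j + (q - k mod q) + k mod q) mod q" by (simp add: mod_add_right_eq)
    also have "j + (q - k mod q) + k mod q = j + q"
    proof -
      have "k mod q < q" using assms by simp
      then show ?thesis by linarith
    qed
    finally have jk: "(j' + k) mod q = j mod q" by simp
    have "rotate j' (rotate k xs) = rotate ((j' + k) mod q) xs"
      using rotate_conv_mod[of "j' + k" xs] assms by (simp add: rotate_rotate)
    also have "\<dots> = rotate j xs" using jk j(1) by simp
    also have "\<dots> = ys" using j(2) by simp
    finally have "rotate j' (rotate k xs) = ys" .
    moreover have "j' < q" unfolding j'_def using assms by simp
    ultimately show "ys \<in> orb q (rotate k xs)" unfolding orb_def by auto
  qed
qed

lemma rotation_dvd:
  assumes q: "prime q" and fin: "finite N"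
    and len: "\<And>xs. xs \<in> N \<Longrightarrow> length xs = q"
    and cl: "\<And>xs. xs \<in> N \<Longrightarrow> rotate1 xs \<in> N"
    and nc: "\<And>xs. xs \<in> N \<Longrightarrow> rotate1 xs \<noteq> xs"
  shows "q dvd card N"
proof -
  have q0: "q > 0" using q prime_gt_0_nat by blast
  have clk: "rotate k xs \<in> N" if "xs \<in> N" for k xs
    using that by (induction k) (auto simp: cl)
  have U: "\<Union>(orb q ` N) = N"
  proof
    show "\<Union>(orb q ` N) \<subseteq> N" unfolding orb_def using clk by auto
    show "N \<subseteq> \<Union>(orb q ` N)"
    proof
      fix xs assume "xs \<in> N"
      moreover have "xs \<in> orb q xs" unfolding orb_def using q0 by (auto intro!: image_eqI[of _ _ 0])
      ultimately show "xs \<in> \<Union>(orb q ` N)" by auto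
    qed
  qed
  have "q * card (orb q ` N) = card (\<Union>(orb q ` N))"
  proof (rule card_partition)
    show "finite (orb q ` N)" using fin by simp
    show "finite (\<Union>(orb q ` N))" using U fin by simp
    show "\<And>c. c \<in> orb q ` N \<Longrightarrow> card c = q" using orb_card[OF q] len nc by auto
    show "\<And>c1 c2. c1 \<in> orb q ` N \<Longrightarrow> c2 \<in> orb q ` N \<Longrightarrow> c1 \<noteq> c2 \<Longrightarrow> c1 \<inter> c2 = {}"
    proof -
      fix c1 c2 assume a: "c1 \<in> orb q ` N" "c2 \<in> orb q ` N" "c1 \<noteq> c2"
      then obtain xs ys where xy: "xs \<in> N" "ys \<in> N" "c1 = orb q xs" "c2 = orb q ys" by auto
      show "c1 \<inter> c2 = {}"
      proof (rule ccontr)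
        assume "c1 \<inter> c2 \<noteq> {}"
        then obtain zs where z1: "zs \<in> orb q xs" and z2: "zs \<in> orb q ys" using xy by auto
        from z1 obtain k where k: "zs = rotate k xs" unfolding orb_def by auto
        from z2 obtain l where l: "zs = rotate l ys" unfolding orb_def by auto
        have e1: "orb q (rotate k xs) = orb q xs" using orb_rotate[of xs q k] len[OF xy(1)] q0 by blast
        have e2: "orb q (rotate l ys) = orb q ys" using orb_rotate[of ys q l] len[OF xy(2)] q0 by blast
        have "rotate k xs = rotate l ys" using k l by (rule trans[OF sym])
        then have "orb q xs = orb q ys" using e1 e2 by metis
        then show False using a xy by simp
      qed
    qed
  qed
  then show ?thesis using U by (metis dvd_triv_left)
qed


locale SR =
  fixes F :: "'a::field_char_0 itself" and p :: nat and D :: "(int \<times> int) set set"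
  assumes pr: "prime p" and sc: "schur_classes F p D" and ph: "phi_classes D = sym_classes"
begin

lemma p_gt1: "p > 1" using pr prime_gt_1_nat by blast
lemma p_pos: "p > 0" using p_gt1 by simp

lemma scu: "(\<forall>C\<in>D. finite C \<and> C \<noteq> {}) \<and>
     (\<forall>C\<in>D. \<forall>C'\<in>D. C \<noteq> C' \<longrightarrow> C \<inter> C' = {}) \<and>
     \<Union>D = Gc p \<and>
     {(0, 0)} \<in> D \<and>
     (\<forall>C\<in>D. ginv p ` C \<in> D) \<and>
     (\<forall>C\<in>D. \<forall>C'\<in>D. conv p (clsum F C) (clsum F C') \<in> cspan F D)"
  using sc unfolding schur_classes_def .

lemma cls_fin: "E \<in> D \<Longrightarrow> finite E" using conjunct1[OF scu] by blast
lemma cls_ne: "E \<in> D \<Longrightarrow> E \<noteq> {}" using conjunct1[OF scu] by blast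
lemma cls_disj: "E \<in> D \<Longrightarrow> E' \<in> D \<Longrightarrow> x \<in> E \<Longrightarrow> x \<in> E' \<Longrightarrow> E = E'"
  using conjunct1[OF conjunct2[OF scu]] by blast
lemma cls_union: "\<Union>D = Gc p" using conjunct1[OF conjunct2[OF conjunct2[OF scu]]] .
lemma cls_Gc: "E \<in> D \<Longrightarrow> E \<subseteq> Gc p" using cls_union by blast
lemma cls_cover: "x \<in> Gc p \<Longrightarrow> \<exists>E\<in>D. x \<in> E" using cls_union by blast
lemma cls_zero: "{(0,0)} \<in> D" using conjunct1[OF conjunct2[OF conjunct2[OF conjunct2[OF scu]]]] .
lemma cls_inv: "E \<in> D \<Longrightarrow> ginv p ` E \<in> D"
  using conjunct1[OF conjunct2[OF conjunct2[OF conjunct2[OF conjunct2[OF scu]]]]] by blast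
lemma cls_prod: "A \<in> D \<Longrightarrow> B \<in> D \<Longrightarrow> conv p (clsum F A) (clsum F B) \<in> cspan F D"
  using conjunct2[OF conjunct2[OF conjunct2[OF conjunct2[OF conjunct2[OF scu]]]]] by blast

lemma cls_level: "E \<in> D \<Longrightarrow> \<exists>t. fst ` E = {t, -t}"
proof -
  assume "E \<in> D"
  then have "fst ` E \<in> phi_classes D" unfolding phi_classes_def by blast
  then show ?thesis using ph unfolding sym_classes_def by auto
qed

lemma Gc_iff: "x \<in> Gc p \<longleftrightarrow> 0 \<le> snd x \<and> snd x < int p"
  by (cases x) (auto simp: Gc_def)

lemma dv_Gc: "dv p y g \<in> Gc p"
  using p_pos by (simp add: Gc_iff dv_def)

lemma cspan_const:
  assumes "f \<in> cspan F D" "E \<in> D" "g \<in> E" "h \<in> E"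
  shows "f g = f h"
proof -
  obtain Es c where Es: "finite Es" "Es \<subseteq> D" "f = (\<lambda>x. \<Sum>E\<in>Es. c E * clsum F E x)"
    using assms(1) unfolding cspan_def by blast
  have val: "f x = (if E \<in> Es then c E else 0)" if "x \<in> E" for x
  proof -
    have "f x = (\<Sum>E'\<in>Es. if E' = E then c E' else 0)"
      unfolding Es(3)
    proof (rule sum.cong)
      fix E' assume "E' \<in> Es"
      then have "E' \<in> D" using Es by auto
      then have "x \<in> E' \<longleftrightarrow> E' = E" using cls_disj assms(2) that by blast
      then show "c E' * clsum F E' x = (if E' = E then c E' else 0)" by (simp add: clsum_def)
    qed simp
    also have "\<dots> = (if E \<in> Es then c E else 0)" using Es(1) by (simp add: sum.delta)
    finally show ?thesis .
  qed
  show ?thesis using val assms(3,4) by simp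
qed

lemma conv_val:
  assumes "finite A" "g \<in> Gc p"
  shows "conv p (clsum F A) (clsum F B) g = of_nat (card {y\<in>A. dv p y g \<in> B})"
proof -
  have s: "{y. clsum F A y \<noteq> (0::'a)} = A" by (auto simp: clsum_def)
  have "conv p (clsum F A) (clsum F B) g = (\<Sum>y\<in>A. clsum F A y * clsum F B (dv p y g))"
    using assms by (simp add: conv_def s gmult_ginv)
  also have "\<dots> = (\<Sum>y\<in>A. if dv p y g \<in> B then 1 else 0)"
    by (rule sum.cong) (auto simp: clsum_def)
  also have "\<dots> = of_nat (card {y\<in>A. dv p y g \<in> B})"
    using assms(1) by (simp add: sum.If_cases Int_def)
  finally show ?thesis .
qed

lemma count_const:
  assumes "A \<in> D" "B \<in> D" "E \<in> D" "g \<in> E" "h \<in> E"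
  shows "card {y\<in>A. dv p y g \<in> B} = card {y\<in>A. dv p y h \<in> B}"
proof -
  have "g \<in> Gc p" "h \<in> Gc p" using cls_Gc assms by auto
  then have "(of_nat (card {y\<in>A. dv p y g \<in> B}) :: 'a) = of_nat (card {y\<in>A. dv p y h \<in> B})"
    using conv_val[of A g B] conv_val[of A h B] cspan_const[OF cls_prod[OF assms(1,2)] assms(3-5)]
      cls_fin[OF assms(1)] by simp
  then show ?thesis by (simp only: of_nat_eq_iff)
qed

definition cls :: "int \<times> int \<Rightarrow> (int \<times> int) set" where
  "cls x = (THE E. E \<in> D \<and> x \<in> E)"

lemma cls_eq: assumes "E \<in> D" "x \<in> E" shows "cls x = E"
  unfolding cls_def
proof (rule the_equality)
  show "E \<in> D \<and> x \<in> E" using assms by simp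
  show "E' = E" if "E' \<in> D \<and> x \<in> E'" for E' using that assms cls_disj by blast
qed

lemma cls_in: "x \<in> Gc p \<Longrightarrow> cls x \<in> D \<and> x \<in> cls x"
proof -
  assume "x \<in> Gc p"
  then obtain E where "E \<in> D" "x \<in> E" using cls_cover by blast
  then show ?thesis using cls_eq by simp
qed

lemma const_step:
  fixes f :: "int \<times> int \<Rightarrow> nat"
  assumes fin: "finite {x. f x \<noteq> 0}" and cst: "\<forall>E\<in>D. \<forall>g\<in>E. \<forall>h\<in>E. f g = f h"
    and A: "A \<in> D" and E: "E \<in> D" "g \<in> E" "h \<in> E"
  shows "(\<Sum>y\<in>A. f (dv p y g)) = (\<Sum>y\<in>A. f (dv p y h))"
proof -
  define S where "S = {x. f x \<noteq> 0}"
  define Es where "Es = {E'\<in>D. E' \<inter> S \<noteq> {}}"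
  define cE where "cE E' = f (SOME x. x \<in> E')" for E'
  have finEs: "finite Es"
  proof -
    have "Es \<subseteq> cls ` S"
    proof
      fix E' assume "E' \<in> Es"
      then obtain x where "x \<in> E'" "x \<in> S" "E' \<in> D" unfolding Es_def by auto
      then show "E' \<in> cls ` S" using cls_eq by (metis image_eqI)
    qed
    then show ?thesis using fin S_def finite_subset by blast
  qed
  have rep: "f x = (\<Sum>E'\<in>Es. cE E' * (if x \<in> E' then 1 else 0))" if xG: "x \<in> Gc p" for x
  proof -
    obtain E0 where E0: "E0 \<in> D" "x \<in> E0" using cls_cover xG by blast
    have "(\<Sum>E'\<in>Es. cE E' * (if x \<in> E' then 1 else 0)) = (\<Sum>E'\<in>Es. if E' = E0 then cE E' else 0)"
    proof (rule sum.cong)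
      fix E' assume "E' \<in> Es"
      then have "E' \<in> D" unfolding Es_def by auto
      then have "x \<in> E' \<longleftrightarrow> E' = E0" using cls_disj E0 by blast
      then show "cE E' * (if x \<in> E' then 1 else 0) = (if E' = E0 then cE E' else 0)" by simp
    qed simp
    also have "\<dots> = (if E0 \<in> Es then cE E0 else 0)" using finEs by (simp add: sum.delta)
    also have "\<dots> = f x"
    proof (cases "E0 \<in> Es")
      case True
      have "(SOME x. x \<in> E0) \<in> E0" using E0 by (meson someI)
      then have "cE E0 = f x" unfolding cE_def using cst E0 by blast
      then show ?thesis using True by simp
    next
      case False
      then have "x \<notin> S" using E0 unfolding Es_def by blast
      then show ?thesis using False unfolding S_def by simp
    qed
    finally show ?thesis by simp
  qed
  have main: "(\<Sum>y\<in>A. f (dv p y x)) = (\<Sum>E'\<in>Es. cE E' * card {y\<in>A. dv p y x \<in> E'})" for x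
  proof -
    have "(\<Sum>y\<in>A. f (dv p y x)) = (\<Sum>y\<in>A. \<Sum>E'\<in>Es. cE E' * (if dv p y x \<in> E' then 1 else 0))"
      using rep dv_Gc by simp
    also have "\<dots> = (\<Sum>E'\<in>Es. \<Sum>y\<in>A. cE E' * (if dv p y x \<in> E' then 1 else 0))"
      by (rule sum.swap)
    also have "\<dots> = (\<Sum>E'\<in>Es. cE E' * card {y\<in>A. dv p y x \<in> E'})"
    proof (rule sum.cong)
      fix E' assume "E' \<in> Es"
      have "(\<Sum>y\<in>A. cE E' * (if dv p y x \<in> E' then 1 else 0)) = cE E' * (\<Sum>y\<in>A. (if dv p y x \<in> E' then 1 else 0))"
        by (simp add: sum_distrib_left)
      also have "(\<Sum>y\<in>A. (if dv p y x \<in> E' then 1 else 0)) = card {y\<in>A. dv p y x \<in> E'}"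
        using cls_fin[OF A] by (simp add: sum.If_cases Int_def)
      finally show "(\<Sum>y\<in>A. cE E' * (if dv p y x \<in> E' then 1 else 0)) = cE E' * card {y\<in>A. dv p y x \<in> E'}" .
    qed simp
    finally show ?thesis .
  qed
  have "\<And>E'. E' \<in> Es \<Longrightarrow> card {y\<in>A. dv p y g \<in> E'} = card {y\<in>A. dv p y h \<in> E'}"
    using count_const[OF A _ E] unfolding Es_def by blast
  then show ?thesis using main[of g] main[of h] by (metis (no_types, lifting) sum.cong)
qed

end


definition Lset :: "nat \<Rightarrow> nat \<Rightarrow> (int \<times> int) set \<Rightarrow> int \<times> int \<Rightarrow> (int \<times> int) list set" where
  "Lset p m X g = {xs. length xs = m \<and> set xs \<subseteq> X \<and> prodl p xs = g}"

definition Ncnt :: "nat \<Rightarrow> nat \<Rightarrow> (int \<times> int) set \<Rightarrow> int \<times> int \<Rightarrow> nat" where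
  "Ncnt p m X g = card (Lset p m X g)"

definition pw :: "nat \<Rightarrow> nat \<Rightarrow> int \<times> int \<Rightarrow> int \<times> int" where
  "pw p q y = (int q * fst y, (int q * snd y) mod int p)"

lemma prodl_replicate: "prodl p (replicate q y) = pw p q y"
  by (simp add: prodl_def pw_def sum_list_replicate)

lemma Lset_fin:
  assumes "finite X" shows "finite (Lset p m X g)"
proof -
  have "Lset p m X g \<subseteq> {xs. set xs \<subseteq> X \<and> length xs = m}" unfolding Lset_def by blast
  then show ?thesis by (rule finite_subset[OF _ finite_lists_length_eq[OF assms]])
qed

lemma Ncnt_supp_fin:
  assumes "finite X" shows "finite {g. Ncnt p m X g \<noteq> 0}"
proof -
  have "{g. Ncnt p m X g \<noteq> 0} \<subseteq> prodl p ` {xs. set xs \<subseteq> X \<and> length xs = m}"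
  proof
    fix g assume "g \<in> {g. Ncnt p m X g \<noteq> 0}"
    then have "Lset p m X g \<noteq> {}" unfolding Ncnt_def by auto
    then obtain xs where "xs \<in> Lset p m X g" by blast
    then show "g \<in> prodl p ` {xs. set xs \<subseteq> X \<and> length xs = m}" unfolding Lset_def by auto
  qed
  then show ?thesis by (rule finite_subset[OF _ finite_imageI[OF finite_lists_length_eq[OF assms]]])
qed

lemma prodl_Cons_iff:
  assumes "0 \<le> snd g" "snd g < int p"
  shows "prodl p (y # xs) = g \<longleftrightarrow> prodl p xs = dv p y g"
proof -
  obtain a b where g: "g = (a, b)" by (cases g)
  define s where "s = sum_list (map snd xs)"
  have "(snd y + s) mod int p = b \<longleftrightarrow> s mod int p = (b - snd y) mod int p"
  proof -
    have bm: "b mod int p = b" using assms g by simp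
    have "(snd y + s) mod int p = b \<longleftrightarrow> (snd y + s) mod int p = b mod int p" by (simp only: bm)
    also have "\<dots> \<longleftrightarrow> int p dvd (snd y + s - b)" by (simp add: mod_eq_dvd_iff)
    also have "\<dots> \<longleftrightarrow> int p dvd (s - (b - snd y))" by (simp add: algebra_simps)
    also have "\<dots> \<longleftrightarrow> s mod int p = (b - snd y) mod int p" by (simp add: mod_eq_dvd_iff)
    finally show ?thesis .
  qed
  then show ?thesis unfolding prodl_def dv_def g s_def by auto
qed

context SR
begin

lemma Lset_Suc:
  assumes "g \<in> Gc p"
  shows "Lset p (Suc m) X g = (\<Union>y\<in>X. (Cons y) ` Lset p m X (dv p y g))"
proof -
  have sg: "0 \<le> snd g" "snd g < int p" using assms Gc_iff by auto
  show ?thesis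
  proof
    show "Lset p (Suc m) X g \<subseteq> (\<Union>y\<in>X. (Cons y) ` Lset p m X (dv p y g))"
    proof
      fix zs assume "zs \<in> Lset p (Suc m) X g"
      then obtain y xs where "zs = y # xs" "length xs = m" "y \<in> X" "set xs \<subseteq> X" "prodl p (y # xs) = g"
        unfolding Lset_def by (cases zs) auto
      then show "zs \<in> (\<Union>y\<in>X. (Cons y) ` Lset p m X (dv p y g))"
        using prodl_Cons_iff[OF sg] unfolding Lset_def by auto
    qed
    show "(\<Union>y\<in>X. (Cons y) ` Lset p m X (dv p y g)) \<subseteq> Lset p (Suc m) X g"
      using prodl_Cons_iff[OF sg] unfolding Lset_def by auto
  qed
qed

lemma Ncnt_Suc:
  assumes "finite X" "g \<in> Gc p"
  shows "Ncnt p (Suc m) X g = (\<Sum>y\<in>X. Ncnt p m X (dv p y g))"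
proof -
  have "Ncnt p (Suc m) X g = card (\<Union>y\<in>X. (Cons y) ` Lset p m X (dv p y g))"
    unfolding Ncnt_def using Lset_Suc[OF assms(2)] by simp
  also have "\<dots> = (\<Sum>y\<in>X. card ((Cons y) ` Lset p m X (dv p y g)))"
    by (rule card_UN_disjoint) (auto simp: assms(1) Lset_fin)
  also have "\<dots> = (\<Sum>y\<in>X. Ncnt p m X (dv p y g))"
    unfolding Ncnt_def by (rule sum.cong) (auto simp: card_image)
  finally show ?thesis .
qed

lemma Ncnt_const:
  assumes X: "X \<in> D"
  shows "\<forall>E\<in>D. \<forall>g\<in>E. \<forall>h\<in>E. Ncnt p m X g = Ncnt p m X h"
proof (induction m)
  case 0
  have L0: "Lset p 0 X g = (if g = (0,0) then {[]} else {})" for g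
    by (auto simp: Lset_def prodl_def)
  show ?case
  proof (intro ballI)
    fix E g h assume a: "E \<in> D" "g \<in> E" "h \<in> E"
    have "g = (0,0) \<longleftrightarrow> h = (0,0)"
    proof
      assume "g = (0,0)" then have "E = {(0,0)}" using cls_disj[OF a(1) cls_zero a(2)] by simp
      then show "h = (0,0)" using a by simp
    next
      assume "h = (0,0)" then have "E = {(0,0)}" using cls_disj[OF a(1) cls_zero a(3)] by simp
      then show "g = (0,0)" using a by simp
    qed
    then show "Ncnt p 0 X g = Ncnt p 0 X h" unfolding Ncnt_def L0 by simp
  qed
next
  case (Suc m)
  show ?case
  proof (intro ballI)
    fix E g h assume a: "E \<in> D" "g \<in> E" "h \<in> E"
    have "g \<in> Gc p" "h \<in> Gc p" using a cls_Gc by auto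
    then show "Ncnt p (Suc m) X g = Ncnt p (Suc m) X h"
      using Ncnt_Suc[OF cls_fin[OF X]] const_step[OF Ncnt_supp_fin[OF cls_fin[OF X]] Suc X a]
      by simp
  qed
qed

end

lemma rotate1_replicate: "rotate1 (replicate n y) = replicate n y"
  by (cases n) (auto simp: replicate_append_same)

lemma frob:
  assumes q: "prime q" and fin: "finite X" and inj: "inj_on (pw p q) X"
  shows "Ncnt p q X g mod q = (if g \<in> pw p q ` X then 1 else 0)"
proof -
  have q1: "q > 1" using q prime_gt_1_nat by blast
  define L where "L = Lset p q X g"
  define Lc where "Lc = {xs\<in>L. rotate1 xs = xs}"
  define NC where "NC = L - Lc"
  have finL: "finite L" unfolding L_def using Lset_fin[OF fin] .
  have rotL: "rotate1 xs \<in> L" if "xs \<in> L" for xs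
  proof -
    have "prodl p (rotate1 xs) = prodl p xs" using prodl_rotate[of p 1 xs] by simp
    then show ?thesis using that unfolding L_def Lset_def by simp
  qed
  have "q dvd card NC"
  proof (rule rotation_dvd[OF q])
    show "finite NC" unfolding NC_def using finL by simp
    show "\<And>xs. xs \<in> NC \<Longrightarrow> length xs = q" unfolding NC_def L_def Lset_def by simp
    show "\<And>xs. xs \<in> NC \<Longrightarrow> rotate1 xs \<noteq> xs" unfolding NC_def Lc_def by simp
    show "\<And>xs. xs \<in> NC \<Longrightarrow> rotate1 xs \<in> NC"
    proof -
      fix xs assume "xs \<in> NC"
      then have "xs \<in> L" "rotate1 xs \<noteq> xs" unfolding NC_def Lc_def by auto
      moreover have "rotate1 (rotate1 xs) \<noteq> rotate1 xs" using calculation(2)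
        by (simp add: inj_eq[OF inj_rotate1])
      ultimately show "rotate1 xs \<in> NC" using rotL unfolding NC_def Lc_def by auto
    qed
  qed
  have LcR: "Lc = (\<lambda>y. replicate q y) ` {y\<in>X. pw p q y = g}"
  proof
    show "Lc \<subseteq> (\<lambda>y. replicate q y) ` {y\<in>X. pw p q y = g}"
    proof
      fix xs assume xs: "xs \<in> Lc"
      then have len: "length xs = q" and r: "rotate1 xs = xs" and sx: "set xs \<subseteq> X"
        and pg: "prodl p xs = g"
        unfolding Lc_def L_def Lset_def by auto
      have xr: "xs = replicate q (xs ! 0)"
      proof (rule nth_equalityI)
        show "length xs = length (replicate q (xs ! 0))" using len by simp
        fix i assume i: "i < length xs"
        have "xs ! i = xs ! 0" using rotate1_fix_const[OF r i] .
        then show "xs ! i = replicate q (xs ! 0) ! i" using i len by simp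
      qed
      have "xs ! 0 \<in> set xs" using len q1 by simp
      then have x0: "xs ! 0 \<in> X" using sx by blast
      have "pw p q (xs ! 0) = g" using pg xr prodl_replicate[of p q "xs ! 0"] by simp
      then have "xs ! 0 \<in> {y\<in>X. pw p q y = g}" using x0 by simp
      then show "xs \<in> (\<lambda>y. replicate q y) ` {y\<in>X. pw p q y = g}"
        using xr by (rule rev_image_eqI)
    qed
    show "(\<lambda>y. replicate q y) ` {y\<in>X. pw p q y = g} \<subseteq> Lc"
      unfolding Lc_def L_def Lset_def using prodl_replicate rotate1_replicate by auto
  qed
  have cLc: "card Lc = (if g \<in> pw p q ` X then 1 else 0)"
  proof -
    have "inj_on (\<lambda>y. replicate q y) {y\<in>X. pw p q y = g}"
    proof (rule inj_onI)
      fix x y assume "replicate q x = replicate q y"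
      then have "replicate q x ! 0 = replicate q y ! 0" by (rule arg_cong)
      then show "x = y" using q1 by simp
    qed
    then have "card Lc = card {y\<in>X. pw p q y = g}" unfolding LcR by (simp add: card_image)
    also have "\<dots> = (if g \<in> pw p q ` X then 1 else 0)"
    proof (cases "g \<in> pw p q ` X")
      case True
      then obtain y where y: "y \<in> X" "pw p q y = g" by blast
      then have "{y\<in>X. pw p q y = g} = {y}" using inj unfolding inj_on_def by blast
      then show ?thesis using True by simp
    next
      case False
      then have "{y\<in>X. pw p q y = g} = {}" by blast
      then show ?thesis using False by (simp only: card.empty if_False)
    qed
    finally show ?thesis .
  qed
  have sub: "Lc \<subseteq> L" unfolding Lc_def by blast
  have finLc: "finite Lc" using finite_subset[OF sub finL] .
  have "card NC = card L - card Lc" unfolding NC_def using card_Diff_subset[OF finLc sub] .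
  moreover have "card Lc \<le> card L" using card_mono[OF finL sub] .
  ultimately have cl: "card L = card Lc + card NC" by simp
  obtain k where k: "card NC = q * k" using \<open>q dvd card NC\<close> by (elim dvdE)
  have "card L mod q = card Lc mod q" unfolding cl k by simp
  also have "\<dots> = (if g \<in> pw p q ` X then 1 else 0)" unfolding cLc using q1 by simp
  finally show ?thesis unfolding Ncnt_def L_def .
qed

context SR
begin

lemma pw_inj:
  assumes q: "prime q" "q \<noteq> p"
  shows "inj_on (pw p q) (Gc p)"
proof
  fix x y assume xy: "x \<in> Gc p" "y \<in> Gc p" "pw p q x = pw p q y"
  have q0: "int q \<noteq> 0" using q prime_gt_0_nat by simp
  have f: "fst x = fst y" using xy q0 unfolding pw_def by simp
  have "(int q * snd x) mod int p = (int q * snd y) mod int p" using xy unfolding pw_def by simp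
  then have "int p dvd int q * (snd x - snd y)" by (simp add: mod_eq_dvd_iff algebra_simps)
  moreover have "\<not> int p dvd int q"
  proof
    assume "int p dvd int q"
    then have "p dvd q" by simp
    then have "p = 1 \<or> p = q" using q(1) unfolding prime_nat_iff by blast
    then show False using q(2) p_gt1 by simp
  qed
  moreover have "prime (int p)" using pr by simp
  ultimately have "int p dvd (snd x - snd y)" using prime_dvd_mult_iff by blast
  then have "snd x mod int p = snd y mod int p" by (simp add: mod_eq_dvd_iff)
  then have "snd x = snd y" using xy Gc_iff by simp
  then show "x = y" using f by (simp add: prod_eq_iff)
qed

lemma mult_union:
  assumes X: "X \<in> D" and q: "prime q" "q \<noteq> p"
    and E: "E \<in> D" "g \<in> E" "h \<in> E" and g: "g \<in> pw p q ` X"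
  shows "h \<in> pw p q ` X"
proof (rule ccontr)
  assume h: "h \<notin> pw p q ` X"
  have inj: "inj_on (pw p q) X" using inj_on_subset[OF pw_inj[OF q] cls_Gc[OF X]] .
  have "Ncnt p q X g = Ncnt p q X h" using Ncnt_const[OF X] E by blast
  moreover have "Ncnt p q X g mod q = 1" using frob[OF q(1) cls_fin[OF X] inj] g by simp
  moreover have "Ncnt p q X h mod q = 0" using frob[OF q(1) cls_fin[OF X] inj] h by simp
  ultimately show False by simp
qed

end


lemma modh: "((a::int) + m * (b mod n)) mod n = (a + m * b) mod n"
  by (metis mod_add_right_eq mod_mult_right_eq)

lemma modh2: "((a mod n) * x + (b mod n) * y) mod n = (a * x + b * y) mod (n::int)"
  by (metis mod_add_eq mod_mult_left_eq)

lemma modh3: "((a mod n) * x + b) mod n = (a * x + b) mod (n::int)"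
  by (metis mod_add_left_eq mod_mult_left_eq)

definition Af :: "nat \<Rightarrow> int \<Rightarrow> int \<Rightarrow> int \<Rightarrow> int \<times> int \<Rightarrow> int \<times> int" where
  "Af p e c m x = (e * fst x, (c * fst x + m * snd x) mod int p)"

definition Ar :: "nat \<Rightarrow> int \<Rightarrow> int \<Rightarrow> int \<Rightarrow> int \<times> int \<Rightarrow> int \<times> int" where
  "Ar p e c m = restrict (Af p e c m) (Gc p)"

lemma Gc_mem: "x \<in> Gc p \<longleftrightarrow> 0 \<le> snd x \<and> snd x < int p"
  by (cases x) (auto simp: Gc_def)

lemma Af_Gc: "p > 0 \<Longrightarrow> Af p e c m x \<in> Gc p"
  by (simp add: Af_def Gc_mem)

lemma Af_comp:
  "Af p e1 c1 m1 (Af p e2 c2 m2 x) = Af p (e1 * e2) ((c1 * e2 + m1 * c2) mod int p) ((m1 * m2) mod int p) x"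
proof -
  have "(c1 * (e2 * fst x) + m1 * ((c2 * fst x + m2 * snd x) mod int p)) mod int p
      = (c1 * (e2 * fst x) + m1 * (c2 * fst x + m2 * snd x)) mod int p" by (rule modh)
  also have "\<dots> = ((c1 * e2 + m1 * c2) * fst x + (m1 * m2) * snd x) mod int p"
    by (simp add: algebra_simps)
  also have "\<dots> = (((c1 * e2 + m1 * c2) mod int p) * fst x + ((m1 * m2) mod int p) * snd x) mod int p"
    by (rule modh2[symmetric])
  finally show ?thesis by (simp add: Af_def mult.assoc)
qed

lemma Af_mod: "Af p e (c mod int p) (m mod int p) x = Af p e c m x"
  by (simp add: Af_def modh2)

lemma Af_id: "x \<in> Gc p \<Longrightarrow> Af p 1 0 1 x = x"
  by (cases x) (simp add: Af_def Gc_mem)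

lemma Af_hom:
  "Af p e c m (gmult p x y) = gmult p (Af p e c m x) (Af p e c m y)"
proof -
  have "(c * (fst x + fst y) + m * ((snd x + snd y) mod int p)) mod int p
       = (c * (fst x + fst y) + m * (snd x + snd y)) mod int p" by (rule modh)
  also have "\<dots> = ((c * fst x + m * snd x) + (c * fst y + m * snd y)) mod int p"
    by (simp add: algebra_simps)
  also have "\<dots> = ((c * fst x + m * snd x) mod int p + (c * fst y + m * snd y) mod int p) mod int p"
    by (rule mod_add_eq[symmetric])
  finally show ?thesis by (simp add: Af_def gmult_def algebra_simps)
qed

lemma group_Grp:
  assumes "p > 0" shows "group (Grp p)"
proof (rule groupI)
  show "\<And>x y. x \<in> carrier (Grp p) \<Longrightarrow> y \<in> carrier (Grp p) \<Longrightarrow> x \<otimes>\<^bsub>Grp p\<^esub> y \<in> carrier (Grp p)"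
    using assms by (simp add: Grp_def gmult_def Gc_mem)
  show "\<one>\<^bsub>Grp p\<^esub> \<in> carrier (Grp p)" using assms by (simp add: Grp_def Gc_mem)
  show "\<And>x y z. x \<in> carrier (Grp p) \<Longrightarrow> y \<in> carrier (Grp p) \<Longrightarrow> z \<in> carrier (Grp p) \<Longrightarrow>
      x \<otimes>\<^bsub>Grp p\<^esub> y \<otimes>\<^bsub>Grp p\<^esub> z = x \<otimes>\<^bsub>Grp p\<^esub> (y \<otimes>\<^bsub>Grp p\<^esub> z)"
    by (simp add: Grp_def gmult_def mod_add_left_eq mod_add_right_eq add.assoc)
  show "\<And>x. x \<in> carrier (Grp p) \<Longrightarrow> \<one>\<^bsub>Grp p\<^esub> \<otimes>\<^bsub>Grp p\<^esub> x = x"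
    by (auto simp: Grp_def gmult_def Gc_mem)
  show "\<exists>y\<in>carrier (Grp p). y \<otimes>\<^bsub>Grp p\<^esub> x = \<one>\<^bsub>Grp p\<^esub>" if "x \<in> carrier (Grp p)" for x
  proof
    show "ginv p x \<in> carrier (Grp p)" using assms by (simp add: Grp_def ginv_def Gc_mem)
    show "ginv p x \<otimes>\<^bsub>Grp p\<^esub> x = \<one>\<^bsub>Grp p\<^esub>"
      by (simp add: Grp_def gmult_def ginv_def mod_add_left_eq)
  qed
qed

lemma Af_inv:
  assumes p: "prime p" and e: "e \<in> {1, -1}" and m: "coprime m (int p)"
  shows "\<exists>c' m'. c' \<in> {0..<int p} \<and> m' \<in> {1..<int p} \<and>
     (\<forall>x \<in> Gc p. Af p e c' m' (Af p e c m x) = x \<and> Af p e c m (Af p e c' m' x) = x)"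
proof -
  obtain m0 where m0: "[m * m0 = 1] (mod int p)" using cong_solve_coprime_int[OF m] by blast
  define m' where "m' = m0 mod int p"
  define c' where "c' = (- (m' * c * e)) mod int p"
  have p1: "int p > 1" using p prime_gt_1_nat by simp
  have ee: "e * e = 1" using e by auto
  have mm: "(m' * m) mod int p = 1" "(m * m') mod int p = 1"
    using m0 p1 unfolding m'_def cong_def by (simp_all add: mod_mult_right_eq mult.commute)
  have cc1: "(c' * e + m' * c) mod int p = 0"
  proof -
    have "(c' * e + m' * c) mod int p = (- (m' * c * e) * e + m' * c) mod int p"
      unfolding c'_def by (rule modh3)
    also have "- (m' * c * e) * e + m' * c = 0" using ee by (simp add: algebra_simps)
    finally show ?thesis by simp
  qed
  have cc2: "(c * e + m * c') mod int p = 0"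
  proof -
    have "(c * e + m * c') mod int p = (c * e + m * (- (m' * c * e))) mod int p"
      unfolding c'_def by (rule modh)
    also have "\<dots> = (c * e - (m * m') * (c * e)) mod int p" by (simp add: algebra_simps)
    also have "\<dots> = (c * e - ((m * m') mod int p) * (c * e)) mod int p"
      by (metis mod_diff_right_eq mod_mult_left_eq)
    also have "\<dots> = 0" using mm by simp
    finally show ?thesis .
  qed
  have "m' \<noteq> 0" using mm by auto
  moreover have "0 \<le> m'" "m' < int p" unfolding m'_def using p1 by auto
  ultimately have m'r: "m' \<in> {1..<int p}" by simp
  have c'r: "c' \<in> {0..<int p}" unfolding c'_def using p1 by simp
  show ?thesis
  proof (intro exI conjI ballI)
    show "c' \<in> {0..<int p}" "m' \<in> {1..<int p}" using c'r m'r by auto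
  next
    fix x assume x: "x \<in> Gc p"
    show "Af p e c' m' (Af p e c m x) = x"
      using x by (simp add: Af_comp ee cc1 mm Af_id)
    show "Af p e c m (Af p e c' m' x) = x"
      using x by (simp add: Af_comp ee cc2 mm Af_id)
  qed
qed

lemma Ar_auto:
  assumes p: "prime p" and e: "e \<in> {1, -1}" and m: "coprime m (int p)"
  shows "Ar p e c m \<in> auto (Grp p)"
proof -
  have p0: "p > 0" using p prime_gt_0_nat by blast
  obtain c' m' where inv: "\<forall>x \<in> Gc p. Af p e c' m' (Af p e c m x) = x \<and> Af p e c m (Af p e c' m' x) = x"
    using Af_inv[OF p e m] by blast
  have "bij_betw (Af p e c m) (Gc p) (Gc p)"
    by (rule bij_betw_byWitness[where f' = "Af p e c' m'"]) (use inv Af_Gc[OF p0] in auto)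
  moreover have "bij_betw (Ar p e c m) (Gc p) (Gc p) = bij_betw (Af p e c m) (Gc p) (Gc p)"
    unfolding Ar_def by (rule bij_betw_cong) simp
  ultimately have b: "bij_betw (Ar p e c m) (Gc p) (Gc p)" by simp
  have h: "Ar p e c m \<in> hom (Grp p) (Grp p)"
    unfolding hom_def Ar_def
  proof (intro CollectI conjI ballI)
    show "restrict (Af p e c m) (Gc p) \<in> carrier (Grp p) \<rightarrow> carrier (Grp p)"
      using Af_Gc[OF p0] by (auto simp: Grp_def)
    fix x y assume xy: "x \<in> carrier (Grp p)" "y \<in> carrier (Grp p)"
    have "x \<otimes>\<^bsub>Grp p\<^esub> y \<in> Gc p"
      using monoid.m_closed[OF group.is_monoid[OF group_Grp[OF p0]] xy]
      by (simp add: Grp_def)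
    then show "restrict (Af p e c m) (Gc p) (x \<otimes>\<^bsub>Grp p\<^esub> y) =
        restrict (Af p e c m) (Gc p) x \<otimes>\<^bsub>Grp p\<^esub> restrict (Af p e c m) (Gc p) y"
      using xy by (simp add: Grp_def Af_hom)
  qed
  show ?thesis unfolding auto_def Bij_def using h b by (simp add: Ar_def Grp_def)
qed


definition Hset :: "nat \<Rightarrow> (int \<times> int) set set \<Rightarrow> (int \<times> int \<Rightarrow> int \<times> int) set" where
  "Hset p D = {Ar p e c m | e c m. e \<in> {1, -1} \<and> c \<in> {0..<int p} \<and> m \<in> {1..<int p} \<and>
      (\<forall>E\<in>D. Af p e c m ` E = E)}"

lemma Hset_iff: "\<sigma> \<in> Hset p D \<longleftrightarrow> (\<exists>e c m. \<sigma> = Ar p e c m \<and> e \<in> {1, -1} \<and> c \<in> {0..<int p} \<and>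
   m \<in> {1..<int p} \<and> (\<forall>E\<in>D. Af p e c m ` E = E))"
  unfolding Hset_def by (simp only: mem_Collect_eq)

lemma HsetE:
  assumes "\<sigma> \<in> Hset p D"
  obtains e c m where "\<sigma> = Ar p e c m" "e \<in> {1,-1}" "c \<in> {0..<int p}" "m \<in> {1..<int p}"
    "\<forall>E\<in>D. Af p e c m ` E = E"
proof -
  from assms[unfolded Hset_iff] obtain e where "\<exists>c m. \<sigma> = Ar p e c m \<and> e \<in> {1, -1} \<and> c \<in> {0..<int p} \<and>
   m \<in> {1..<int p} \<and> (\<forall>E\<in>D. Af p e c m ` E = E)" ..
  then obtain c where "\<exists>m. \<sigma> = Ar p e c m \<and> e \<in> {1, -1} \<and> c \<in> {0..<int p} \<and>
   m \<in> {1..<int p} \<and> (\<forall>E\<in>D. Af p e c m ` E = E)" ..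
  then obtain m where h: "\<sigma> = Ar p e c m \<and> e \<in> {1, -1} \<and> c \<in> {0..<int p} \<and>
   m \<in> {1..<int p} \<and> (\<forall>E\<in>D. Af p e c m ` E = E)" ..
  show ?thesis using h by (intro that) auto
qed

lemma HsetI:
  assumes "e \<in> {1,-1}" "c \<in> {0..<int p}" "m \<in> {1..<int p}" "\<forall>E\<in>D. Af p e c m ` E = E"
  shows "Ar p e c m \<in> Hset p D"
proof -
  have "\<exists>e' c' m'. Ar p e c m = Ar p e' c' m' \<and> e' \<in> {1, -1} \<and> c' \<in> {0..<int p} \<and>
       m' \<in> {1..<int p} \<and> (\<forall>E\<in>D. Af p e' c' m' ` E = E)"
    apply (rule exI[of _ e], rule exI[of _ c], rule exI[of _ m])
    using assms by simp
  then show ?thesis by (rule Hset_iff[THEN iffD2])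
qed

lemma coprime_range:
  assumes "prime p" "m \<in> {1..<int p}" shows "coprime m (int p)"
proof -
  have pi: "prime (int p)" using assms by simp
  have "\<not> int p dvd m" using assms(2) zdvd_imp_le by fastforce
  then show ?thesis using prime_imp_coprime[OF pi] coprime_commute by blast
qed

lemma Ar_compose:
  assumes "p > 0"
  shows "compose (Gc p) (Ar p e1 c1 m1) (Ar p e2 c2 m2) =
    Ar p (e1 * e2) ((c1 * e2 + m1 * c2) mod int p) ((m1 * m2) mod int p)"
proof (rule ext)
  fix x show "compose (Gc p) (Ar p e1 c1 m1) (Ar p e2 c2 m2) x =
    Ar p (e1 * e2) ((c1 * e2 + m1 * c2) mod int p) ((m1 * m2) mod int p) x"
  proof (cases "x \<in> Gc p")
    case True
    then show ?thesis using Af_Gc[OF assms] by (simp add: compose_def Ar_def Af_comp)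
  next
    case False
    then show ?thesis by (simp add: compose_def Ar_def)
  qed
qed

lemma img_comp_id:
  assumes "\<forall>x\<in>E. g (f x) = x" "f ` E = E"
  shows "g ` E = E"
proof -
  have "g ` E = g ` (f ` E)" using assms(2) by simp
  also have "\<dots> = E" using assms(1) by (force simp: image_image)
  finally show ?thesis .
qed

lemma Hset_subgroup:
  assumes p: "prime p" and DG: "\<forall>E\<in>D. E \<subseteq> Gc p"
  shows "subgroup (Hset p D) (AutoGroup (Grp p))"
proof -
  have p0: "p > 0" using p prime_gt_0_nat by blast
  have p1: "int p > 1" using p prime_gt_1_nat by simp
  interpret AG: group "AutoGroup (Grp p)" using group.AutoGroup[OF group_Grp[OF p0]] .
  have carr: "carrier (AutoGroup (Grp p)) = auto (Grp p)" by (simp add: AutoGroup_def)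
  have mult: "x \<otimes>\<^bsub>AutoGroup (Grp p)\<^esub> y = compose (Gc p) x y"
    if "x \<in> auto (Grp p)" "y \<in> auto (Grp p)" for x y
    using that by (simp add: AutoGroup_def BijGroup_def auto_def Grp_def)
  have one: "\<one>\<^bsub>AutoGroup (Grp p)\<^esub> = (\<lambda>x\<in>Gc p. x)" by (simp add: AutoGroup_def BijGroup_def Grp_def)
  have sub: "Hset p D \<subseteq> carrier (AutoGroup (Grp p))"
  proof
    fix \<sigma> assume s: "\<sigma> \<in> Hset p D"
    obtain e c m where "\<sigma> = Ar p e c m" "e \<in> {1, -1}" "m \<in> {1..<int p}"
      using s by (rule HsetE)
    then show "\<sigma> \<in> carrier (AutoGroup (Grp p))"
      unfolding carr using Ar_auto[OF p] coprime_range[OF p] by blast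
  qed
  show ?thesis
  proof (rule AG.subgroupI)
    show "Hset p D \<subseteq> carrier (AutoGroup (Grp p))" using sub .
    have idE: "\<forall>E\<in>D. Af p 1 0 1 ` E = E"
    proof
      fix E assume E: "E \<in> D"
      have "\<forall>x\<in>E. Af p 1 0 1 x = x" using Af_id DG E by blast
      then show "Af p 1 0 1 ` E = E" by simp
    qed
    have "\<exists>e c m. Ar p 1 0 1 = Ar p e c m \<and> e \<in> {1, -1} \<and> c \<in> {0..<int p} \<and>
       m \<in> {1..<int p} \<and> (\<forall>E\<in>D. Af p e c m ` E = E)"
      apply (rule exI[of _ 1], rule exI[of _ 0], rule exI[of _ 1])
      using p1 idE by simp
    then have "Ar p 1 0 1 \<in> Hset p D" by (rule Hset_iff[THEN iffD2])
    then show "Hset p D \<noteq> {}" by blast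
  next
    fix a assume a: "a \<in> Hset p D"
    then obtain e c m where ecm: "a = Ar p e c m" "e \<in> {1,-1}" "c \<in> {0..<int p}" "m \<in> {1..<int p}"
      "\<forall>E\<in>D. Af p e c m ` E = E" by (rule HsetE)
    obtain c' m' where cm': "c' \<in> {0..<int p}" "m' \<in> {1..<int p}"
      "\<forall>x \<in> Gc p. Af p e c' m' (Af p e c m x) = x \<and> Af p e c m (Af p e c' m' x) = x"
      using Af_inv[OF p ecm(2) coprime_range[OF p ecm(4)]] by blast
    have bH: "Ar p e c' m' \<in> Hset p D"
    proof -
      have "Af p e c' m' ` E = E" if ED: "E \<in> D" for E
      proof -
        have "\<forall>x\<in>E. Af p e c' m' (Af p e c m x) = x" using cm'(3) DG ED by blast
        moreover have "Af p e c m ` E = E" using ecm(5) ED by blast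
        ultimately show ?thesis by (rule img_comp_id)
      qed
      then have "\<forall>E\<in>D. Af p e c' m' ` E = E" by blast
      then show ?thesis by (rule HsetI[OF ecm(2) cm'(1,2)])
    qed
    have "Ar p e c' m' \<otimes>\<^bsub>AutoGroup (Grp p)\<^esub> a = \<one>\<^bsub>AutoGroup (Grp p)\<^esub>"
    proof -
      have "Ar p e c' m' \<in> auto (Grp p)" "a \<in> auto (Grp p)" using sub bH a carr by auto
      then have "Ar p e c' m' \<otimes>\<^bsub>AutoGroup (Grp p)\<^esub> a = compose (Gc p) (Ar p e c' m') a" by (rule mult)
      also have "\<dots> = (\<lambda>x\<in>Gc p. x)"
      proof (rule ext)
        fix x show "compose (Gc p) (Ar p e c' m') a x = (\<lambda>x\<in>Gc p. x) x"
          using cm'(3) Af_Gc[OF p0] by (cases "x \<in> Gc p") (auto simp: compose_def Ar_def ecm(1))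
      qed
      finally show ?thesis using one by simp
    qed
    then have "inv\<^bsub>AutoGroup (Grp p)\<^esub> a = Ar p e c' m'"
      using AG.inv_equality sub a bH by blast
    then show "inv\<^bsub>AutoGroup (Grp p)\<^esub> a \<in> Hset p D" using bH by simp
  next
    fix a b assume a: "a \<in> Hset p D" and b: "b \<in> Hset p D"
    obtain e1 c1 m1 where A: "a = Ar p e1 c1 m1" "e1 \<in> {1,-1}" "c1 \<in> {0..<int p}" "m1 \<in> {1..<int p}"
      "\<forall>E\<in>D. Af p e1 c1 m1 ` E = E" using a by (rule HsetE)
    obtain e2 c2 m2 where B: "b = Ar p e2 c2 m2" "e2 \<in> {1,-1}" "c2 \<in> {0..<int p}" "m2 \<in> {1..<int p}"
      "\<forall>E\<in>D. Af p e2 c2 m2 ` E = E" using b by (rule HsetE)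
    have "a \<otimes>\<^bsub>AutoGroup (Grp p)\<^esub> b = compose (Gc p) a b" using a b sub carr mult by blast
    also have "\<dots> = Ar p (e1 * e2) ((c1 * e2 + m1 * c2) mod int p) ((m1 * m2) mod int p)"
      unfolding A(1) B(1) by (rule Ar_compose[OF p0])
    finally have ab: "a \<otimes>\<^bsub>AutoGroup (Grp p)\<^esub> b = Ar p (e1 * e2) ((c1 * e2 + m1 * c2) mod int p) ((m1 * m2) mod int p)" .
    have e: "e1 * e2 \<in> {1, -1}" using A(2) B(2) by auto
    have c: "(c1 * e2 + m1 * c2) mod int p \<in> {0..<int p}" using p1 by simp
    have m: "(m1 * m2) mod int p \<in> {1..<int p}"
    proof -
      have pi: "prime (int p)" using p by simp
      have "\<not> int p dvd m1" "\<not> int p dvd m2" using A(4) B(4) zdvd_imp_le by fastforce+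
      then have "\<not> int p dvd m1 * m2" using prime_dvd_mult_iff[OF pi] by blast
      then have "(m1 * m2) mod int p \<noteq> 0" by (simp add: dvd_eq_mod_eq_0)
      moreover have "0 \<le> (m1 * m2) mod int p" "(m1 * m2) mod int p < int p" using p1 by simp_all
      ultimately show ?thesis by simp
    qed
    have cl: "Af p (e1 * e2) ((c1 * e2 + m1 * c2) mod int p) ((m1 * m2) mod int p) ` E = E" if "E \<in> D" for E
    proof -
      have "Af p (e1 * e2) ((c1 * e2 + m1 * c2) mod int p) ((m1 * m2) mod int p) ` E
          = Af p e1 c1 m1 ` (Af p e2 c2 m2 ` E)" by (simp add: image_image Af_comp)
      then show ?thesis using A(5) B(5) that by simp
    qed
    show "a \<otimes>\<^bsub>AutoGroup (Grp p)\<^esub> b \<in> Hset p D"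
      unfolding ab using HsetI[OF e c m] cl by blast
  qed
qed

lemma Hset_finite: "finite (Hset p D)"
proof -
  have "Hset p D \<subseteq> (\<lambda>(e, c, m). Ar p e c m) ` ({1, -1} \<times> {0..<int p} \<times> {1..<int p})"
    unfolding Hset_def by force
  then show ?thesis by (rule finite_subset) simp
qed

context SR
begin

lemma final:
  assumes H: "\<forall>\<sigma>\<in>H. \<forall>E\<in>D. \<sigma> ` E = E"
    and tr: "\<forall>E\<in>D. \<forall>g\<in>E. \<forall>h\<in>E. \<exists>\<sigma>\<in>H. \<sigma> g = h"
  shows "cspan F D = fixed_alg F p H"
proof
  show "cspan F D \<subseteq> fixed_alg F p H"
  proof
    fix f assume "f \<in> cspan F D"
    then obtain Es c where Es: "finite Es" "Es \<subseteq> D" "f = (\<lambda>x. \<Sum>E\<in>Es. c E * clsum F E x)"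
      unfolding cspan_def by blast
    have supp: "{x. f x \<noteq> 0} \<subseteq> \<Union>Es"
    proof
      fix x assume "x \<in> {x. f x \<noteq> 0}"
      then have "(\<Sum>E\<in>Es. c E * clsum F E x) \<noteq> 0" using Es(3) by simp
      then obtain E where "E \<in> Es" "c E * clsum F E x \<noteq> 0" by (meson sum.neutral)
      then show "x \<in> \<Union>Es" by (auto simp: clsum_def split: if_splits)
    qed
    have finU: "finite (\<Union>Es)" using Es cls_fin by blast
    have UG: "\<Union>Es \<subseteq> Gc p" using Es cls_Gc by blast
    have inv: "f (\<sigma> x) = f x" if s: "\<sigma> \<in> H" and x: "x \<in> Gc p" for \<sigma> x
    proof -
      have E0: "cls x \<in> D" "x \<in> cls x" using cls_in[OF x] by auto
      have "\<sigma> x \<in> cls x" using H s E0 by blast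
      then have "clsum F E (\<sigma> x) = clsum F E x" if "E \<in> Es" for E
        using that Es(2) E0 cls_disj unfolding clsum_def by (metis subsetD)
      then show ?thesis using Es(3) by simp
    qed
    show "f \<in> fixed_alg F p H"
      unfolding fixed_alg_def grpalg_def
      using finite_subset[OF supp finU] supp UG inv by blast
  qed
next
  show "fixed_alg F p H \<subseteq> cspan F D"
  proof
    fix f assume f: "f \<in> fixed_alg F p H"
    define S where "S = {x. f x \<noteq> 0}"
    have finS: "finite S" and SG: "S \<subseteq> Gc p" using f unfolding fixed_alg_def grpalg_def S_def by auto
    have finv: "\<forall>\<sigma>\<in>H. \<forall>x\<in>Gc p. f (\<sigma> x) = f x" using f unfolding fixed_alg_def by blast
    have cst: "f g = f h" if EDg: "E \<in> D" "g \<in> E" "h \<in> E" for E g h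
    proof -
      obtain \<sigma> where "\<sigma> \<in> H" "\<sigma> g = h" using tr EDg by blast
      moreover have "g \<in> Gc p" using cls_Gc EDg by blast
      ultimately show ?thesis using finv by metis
    qed
    define Es where "Es = {E'\<in>D. E' \<inter> S \<noteq> {}}"
    define cE where "cE E' = f (SOME x. x \<in> E')" for E'
    have finEs: "finite Es"
    proof -
      have "Es \<subseteq> cls ` S"
      proof
        fix E' assume "E' \<in> Es"
        then obtain x where "x \<in> E'" "x \<in> S" "E' \<in> D" unfolding Es_def by auto
        then show "E' \<in> cls ` S" using cls_eq by (metis image_eqI)
      qed
      then show ?thesis by (rule finite_subset) (simp add: finS)
    qed
    have rep: "f x = (\<Sum>E'\<in>Es. cE E' * clsum F E' x)" for x
    proof (cases "x \<in> Gc p")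
      case False
      then have "f x = 0" using SG S_def by blast
      moreover have "clsum F E' x = 0" if "E' \<in> Es" for E'
        using that False cls_Gc unfolding Es_def clsum_def by auto
      ultimately show ?thesis by simp
    next
      case xG: True
      obtain E0 where E0: "E0 \<in> D" "x \<in> E0" using cls_cover xG by blast
      have "(\<Sum>E'\<in>Es. cE E' * clsum F E' x) = (\<Sum>E'\<in>Es. if E' = E0 then cE E' else 0)"
      proof (rule sum.cong)
        fix E' assume "E' \<in> Es"
        then have "E' \<in> D" unfolding Es_def by auto
        then have "x \<in> E' \<longleftrightarrow> E' = E0" using cls_disj E0 by blast
        then show "cE E' * clsum F E' x = (if E' = E0 then cE E' else 0)" by (simp add: clsum_def)
      qed simp
      also have "\<dots> = (if E0 \<in> Es then cE E0 else 0)" using finEs by (simp add: sum.delta)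
      also have "\<dots> = f x"
      proof (cases "E0 \<in> Es")
        case True
        have "(SOME x. x \<in> E0) \<in> E0" using E0 by (meson someI)
        then have "cE E0 = f x" unfolding cE_def using cst E0 by blast
        then show ?thesis using True by simp
      next
        case False
        then have "x \<notin> S" using E0 unfolding Es_def by blast
        then show ?thesis using False unfolding S_def by simp
      qed
      finally show ?thesis by simp
    qed
    have "Es \<subseteq> D" unfolding Es_def by blast
    then show "f \<in> cspan F D" unfolding cspan_def using finEs rep by blast
  qed
qed

lemma automorphic_intro:
  assumes tr: "\<forall>E\<in>D. \<forall>g\<in>E. \<forall>h\<in>E. \<exists>\<sigma>\<in>Hset p D. \<sigma> g = h"
  shows "automorphic F p D"
proof -
  have DG: "\<forall>E\<in>D. E \<subseteq> Gc p" using cls_Gc by blast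
  have H: "\<forall>\<sigma>\<in>Hset p D. \<forall>E\<in>D. \<sigma> ` E = E"
  proof (intro ballI)
    fix \<sigma> E assume s: "\<sigma> \<in> Hset p D" and E: "E \<in> D"
    obtain e c m where "\<sigma> = Ar p e c m" "\<forall>E\<in>D. Af p e c m ` E = E"
      using s by (rule HsetE)
    moreover have "Ar p e c m ` E = Af p e c m ` E" using DG E unfolding Ar_def by auto
    ultimately show "\<sigma> ` E = E" using E by simp
  qed
  show ?thesis unfolding automorphic_def
    using Hset_finite Hset_subgroup[OF pr DG] final[OF H tr] by blast
qed

end


lemma modh4: "((a mod n) * x + b mod n) mod n = (a * x + b) mod (n::int)"
  by (simp only: mod_add_right_eq modh3)

lemma mod_shift_eq: "(a - s) mod n = (b - s) mod n \<longleftrightarrow> a mod n = b mod (n::int)"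
  by (simp add: mod_eq_dvd_iff)

context SR
begin

lemma lev: assumes "E \<in> D" "x \<in> E" "y \<in> E" shows "fst y = fst x \<or> fst y = - fst x"
proof -
  obtain t where "fst ` E = {t, -t}" using cls_level assms(1) by blast
  moreover have "fst x \<in> fst ` E" "fst y \<in> fst ` E" using assms by auto
  ultimately show ?thesis by auto
qed

lemma lev2: assumes "E \<in> D" "x \<in> E" shows "\<exists>y\<in>E. fst y = - fst x"
proof -
  obtain t where t: "fst ` E = {t, -t}" using cls_level assms(1) by blast
  have "fst x \<in> {t, -t}" using assms t by blast
  then have "- fst x \<in> fst ` E" using t by auto
  then show ?thesis by force
qed

lemma supp:
  assumes A: "A \<in> D" and B: "B \<in> D" and E: "E \<in> D" "g \<in> E" "h \<in> E"
    and y0: "y0 \<in> A" "dv p y0 g \<in> B"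
  shows "\<exists>y\<in>A. dv p y h \<in> B"
proof -
  have fin: "finite {y\<in>A. dv p y g \<in> B}" using cls_fin[OF A] by simp
  have "card {y\<in>A. dv p y g \<in> B} > 0" using y0 card_gt_0_iff fin by blast
  then have "card {y\<in>A. dv p y h \<in> B} > 0" using count_const[OF A B E] by simp
  then have "{y\<in>A. dv p y h \<in> B} \<noteq> {}" by (metis card.empty less_irrefl)
  then show ?thesis by blast
qed

lemma Gc_eqI: assumes "x \<in> Gc p" "fst x = a" "snd x mod int p = b mod int p" shows "x = (a, b mod int p)"
proof -
  have "snd x mod int p = snd x" using assms(1) Gc_iff by simp
  then show ?thesis using assms by (cases x) simp
qed

lemma cls_sub_eq:
  assumes "E \<in> D" "E \<subseteq> {u, v}" "u \<in> E" "fst v = - fst u" "fst u \<noteq> 0"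
  shows "E = {u, v}"
proof -
  obtain y where "y \<in> E" "fst y = - fst u" using lev2 assms(1,3) by blast
  then have "y = v" using assms by auto
  then show ?thesis using assms \<open>y \<in> E\<close> by blast
qed

end

locale SRC = SR +
  fixes i j :: int
  assumes Cin: "{(1, i), (-1, j)} \<in> D" and ij: "0 \<le> i" "i < int p" "0 \<le> j" "j < int p"
begin

abbreviation "ip \<equiv> int p"

lemma ip_gt1: "ip > 1" using p_gt1 by simp

lemma dv_simp: "dv p (a, b) (c, d) = (c - a, (d - b) mod ip)" by (simp add: dv_def)

lemma b_sing:
  assumes b: "(i + j) mod ip \<noteq> 0"
  shows "{(0, (i + j) mod ip)} \<in> D"
proof -
  define g where "g = (0::int, (i + j) mod ip)"
  have gG: "g \<in> Gc p" unfolding g_def Gc_iff using ip_gt1 by simp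
  obtain E where E: "E \<in> D" "g \<in> E" using cls_cover gG by blast
  have "E \<subseteq> {g}"
  proof
    fix h assume hE: "h \<in> E"
    have fh: "fst h = 0" using lev[OF E hE] unfolding g_def by simp
    have hG: "h \<in> Gc p" using hE E cls_Gc by blast
    have "dv p (1, i) g \<in> {(1, i), (-1, j)}"
      unfolding g_def using ij by (simp add: dv_def mod_diff_left_eq)
    then obtain y where y: "y \<in> {(1, i), (-1, j)}" "dv p y h \<in> {(1, i), (-1, j)}"
      using supp[OF Cin Cin E hE] by blast
    obtain a b where hab: "h = (a, b)" by (cases h)
    have "b mod ip = (i + j) mod ip"
    proof (cases "y = (1, i)")
      case True
      then have "(b - i) mod ip = j" using y fh hab by (auto simp: dv_def)
      then have "(b - i) mod ip = (j + i - i) mod ip" using ij by simp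
      then show ?thesis by (simp only: mod_shift_eq) (simp add: add.commute)
    next
      case False
      then have "y = (-1, j)" using y by blast
      then have "(b - j) mod ip = i" using y fh hab by (auto simp: dv_def)
      then have "(b - j) mod ip = (i + j - j) mod ip" using ij by simp
      then show ?thesis by (simp only: mod_shift_eq)
    qed
    then have "h = (0, (i + j) mod ip)" using Gc_eqI[OF hG] fh hab by simp
    then show "h \<in> {g}" unfolding g_def by simp
  qed
  then have "E = {g}" using E by blast
  then show ?thesis using E g_def by simp
qed

lemma all_sing:
  assumes b: "(i + j) mod ip \<noteq> 0"
  shows "k \<in> {0..<ip} \<Longrightarrow> {(0, k)} \<in> D"
proof -
  define b0 where "b0 = (i + j) mod ip"
  have B: "{(0, b0)} \<in> D" using b_sing[OF b] b0_def by simp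
  have ind: "{(0, (int n * b0) mod ip)} \<in> D" for n :: nat
  proof (induction n)
    case 0 then show ?case using cls_zero by simp
  next
    case (Suc n)
    define g where "g = (0::int, (int (Suc n) * b0) mod ip)"
    have gG: "g \<in> Gc p" unfolding g_def Gc_iff using ip_gt1 by simp
    obtain E where E: "E \<in> D" "g \<in> E" using cls_cover gG by blast
    have "E \<subseteq> {g}"
    proof
      fix h assume hE: "h \<in> E"
      have hG: "h \<in> Gc p" using hE E cls_Gc by blast
      have "dv p (0, b0) g = (0, (int n * b0) mod ip)"
        unfolding g_def by (simp add: dv_def mod_diff_left_eq algebra_simps)
      then obtain y where y: "y \<in> {(0, b0)}" "dv p y h \<in> {(0, (int n * b0) mod ip)}"
        using supp[OF B Suc E hE, of "(0, b0)"] by auto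
      obtain a c where hac: "h = (a, c)" by (cases h)
      have "a = 0" "(c - b0) mod ip = (int n * b0) mod ip" using y hac by (auto simp: dv_def)
      then have "(c - b0) mod ip = (int (Suc n) * b0 - b0) mod ip" by (simp add: algebra_simps)
      then have "c mod ip = (int (Suc n) * b0) mod ip" by (simp only: mod_shift_eq)
      then show "h \<in> {g}" using Gc_eqI[OF hG] hac \<open>a = 0\<close> unfolding g_def by simp
    qed
    then have "E = {g}" using E by blast
    then show ?case using E g_def by simp
  qed
  assume k: "k \<in> {0..<ip}"
  have "coprime b0 ip"
  proof -
    have "0 < b0" "b0 < ip" using b ip_gt1 unfolding b0_def
      by (simp_all add: order.not_eq_order_implies_strict)
    then have "b0 \<in> {1..<ip}" by simp
    then show ?thesis using coprime_range[OF pr] by blast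
  qed
  then obtain b' where b': "[b0 * b' = 1] (mod ip)" using cong_solve_coprime_int by blast
  define n where "n = nat ((k * b') mod ip)"
  have "int n = (k * b') mod ip" unfolding n_def using ip_gt1 by simp
  then have "(int n * b0) mod ip = (k * b' * b0) mod ip" by (simp add: mod_mult_left_eq)
  also have "\<dots> = (k * ((b0 * b') mod ip)) mod ip" by (simp add: mod_mult_right_eq mult.commute mult.left_commute)
  also have "\<dots> = k" using b' k ip_gt1 unfolding cong_def by simp
  finally show ?thesis using ind[of n] by simp
qed


definition Pn :: "int \<Rightarrow> int \<Rightarrow> (int \<times> int) set" where
  "Pn n c = {(n, c), (- n, (c + n * (j - i)) mod ip)}"

lemma Pn1:
  assumes b: "(i + j) mod ip \<noteq> 0" and c: "c \<in> {0..<ip}"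
  shows "Pn 1 c \<in> D"
proof -
  define d where "d = (c - i) mod ip"
  have dD: "{(0, d)} \<in> D" using all_sing[OF b] ip_gt1 unfolding d_def by simp
  define g where "g = (1::int, c)"
  have gG: "g \<in> Gc p" unfolding g_def Gc_iff using c by simp
  obtain E where E: "E \<in> D" "g \<in> E" using cls_cover gG by blast
  have "E \<subseteq> Pn 1 c"
  proof
    fix h assume hE: "h \<in> E"
    have hG: "h \<in> Gc p" using hE E cls_Gc by blast
    have "dv p (1, i) g = (0, d)" unfolding g_def d_def by (simp add: dv_def)
    then obtain y where y: "y \<in> {(1, i), (-1, j)}" "dv p y h \<in> {(0, d)}"
      using supp[OF Cin dD E hE, of "(1, i)"] by auto
    obtain a e where hae: "h = (a, e)" by (cases h)
    show "h \<in> Pn 1 c"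
    proof (cases "y = (1, i)")
      case True
      then have "a = 1" "(e - i) mod ip = (c - i) mod ip" using y hae unfolding d_def by (auto simp: dv_def)
      then have "e mod ip = c mod ip" by (simp only: mod_shift_eq)
      then have "h = (1, c mod ip)" using Gc_eqI[OF hG] hae \<open>a = 1\<close> by simp
      then show ?thesis using c unfolding Pn_def by simp
    next
      case False
      then have "y = (-1, j)" using y by blast
      then have "a = -1" "(e - j) mod ip = (c - i) mod ip" using y hae unfolding d_def by (auto simp: dv_def)
      then have "(e - j) mod ip = ((c + 1 * (j - i)) - j) mod ip" by (simp add: algebra_simps)
      then have "e mod ip = (c + 1 * (j - i)) mod ip" by (simp only: mod_shift_eq)
      then have "h = (-1, (c + 1 * (j - i)) mod ip)" using Gc_eqI[OF hG] hae \<open>a = -1\<close> by simp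
      then show ?thesis unfolding Pn_def by simp
    qed
  qed
  then have "E = Pn 1 c" unfolding Pn_def using cls_sub_eq[OF E(1)] E(2) unfolding g_def by simp
  then show ?thesis using E by simp
qed

lemma Pn_all:
  assumes b: "(i + j) mod ip \<noteq> 0"
  shows "\<forall>c\<in>{0..<ip}. Pn (int (Suc m)) c \<in> D"
proof (induction m)
  case 0 then show ?case using Pn1[OF b] by simp
next
  case (Suc m)
  define n where "n = int (Suc m)"
  have n1: "n \<ge> 1" unfolding n_def by simp
  show ?case
  proof
    fix c assume c: "c \<in> {0..<ip}"
    define c' where "c' = (c - i) mod ip"
    have c'r: "c' \<in> {0..<ip}" unfolding c'_def using ip_gt1 by simp
    have BD: "Pn n c' \<in> D" using Suc c'r unfolding n_def by blast
    define g where "g = (n + 1, c)"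
    have gG: "g \<in> Gc p" unfolding g_def Gc_iff using c by simp
    obtain E where E: "E \<in> D" "g \<in> E" using cls_cover gG by blast
    have "E \<subseteq> Pn (n + 1) c"
    proof
      fix h assume hE: "h \<in> E"
      have hG: "h \<in> Gc p" using hE E cls_Gc by blast
      obtain a e where hae: "h = (a, e)" by (cases h)
      have alev: "a = n + 1 \<or> a = - (n + 1)" using lev[OF E hE] hae unfolding g_def by simp
      have "dv p (1, i) g \<in> Pn n c'" unfolding g_def c'_def Pn_def by (simp add: dv_def)
      then obtain y where y: "y \<in> {(1, i), (-1, j)}" "dv p y h \<in> Pn n c'"
        using supp[OF Cin BD E hE, of "(1, i)"] by auto
      show "h \<in> Pn (n + 1) c"
      proof (cases "y = (1, i)")
        case True
        then have dvh: "dv p y h = (a - 1, (e - i) mod ip)" using hae by (simp add: dv_def)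
        have "a - 1 = n \<and> (e - i) mod ip = c' \<or> a - 1 = - n" using y(2) dvh unfolding Pn_def by auto
        then have "a = n + 1" "(e - i) mod ip = (c - i) mod ip" using alev n1 unfolding c'_def by auto
        then have "e mod ip = c mod ip" by (simp only: mod_shift_eq)
        then have "h = (n + 1, c)" using Gc_eqI[OF hG] hae \<open>a = n + 1\<close> c by simp
        then show ?thesis unfolding Pn_def by simp
      next
        case False
        then have "y = (-1, j)" using y by blast
        then have dvh: "dv p y h = (a + 1, (e - j) mod ip)" using hae by (simp add: dv_def)
        have "a + 1 = n \<or> a + 1 = - n \<and> (e - j) mod ip = (c' + n * (j - i)) mod ip"
          using y(2) dvh unfolding Pn_def by auto
        then have a1: "a = - (n + 1)" and e1: "(e - j) mod ip = (c' + n * (j - i)) mod ip"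
          using alev n1 by auto
        have "(c' + n * (j - i)) mod ip = ((c - i) + n * (j - i)) mod ip"
          unfolding c'_def by (simp add: mod_add_left_eq)
        also have "\<dots> = ((c + (n + 1) * (j - i)) - j) mod ip" by (simp add: algebra_simps)
        finally have "e mod ip = (c + (n + 1) * (j - i)) mod ip" using e1 by (simp only: mod_shift_eq)
        then have "h = (- (n + 1), (c + (n + 1) * (j - i)) mod ip)" using Gc_eqI[OF hG] hae a1 by simp
        then show ?thesis unfolding Pn_def by simp
      qed
    qed
    then have "E = Pn (n + 1) c" unfolding Pn_def using cls_sub_eq[OF E(1)] E(2) n1 unfolding g_def by simp
    then show "Pn (int (Suc (Suc m))) c \<in> D" using E unfolding n_def by simp
  qed
qed

lemma classify1:
  assumes b: "(i + j) mod ip \<noteq> 0" and E: "E \<in> D"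
  shows "(\<exists>k\<in>{0..<ip}. E = {(0, k)}) \<or> (\<exists>n c. n \<ge> 1 \<and> c \<in> {0..<ip} \<and> E = Pn n c)"
proof -
  obtain g where g: "g \<in> E" using cls_ne[OF E] by blast
  have gG: "g \<in> Gc p" using g E cls_Gc by blast
  obtain a e where gae: "g = (a, e)" by (cases g)
  have er: "e \<in> {0..<ip}" using gG gae Gc_iff by simp
  consider "a = 0" | "a > 0" | "a < 0" by linarith
  then show ?thesis
  proof cases
    case 1
    then have "E = {(0, e)}" using cls_disj[OF E all_sing[OF b er]] g gae by simp
    then show ?thesis using er by blast
  next
    case 2
    then obtain m where "a = int (Suc m)" by (metis gr0_implies_Suc pos_int_cases of_nat_0_less_iff)
    then have "Pn a e \<in> D" using Pn_all[OF b] er by blast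
    then have "E = Pn a e" using cls_disj[OF E] g gae unfolding Pn_def by simp
    then show ?thesis using 2 er by (intro disjI2 exI[of _ a] exI[of _ e]) simp
  next
    case 3
    define n where "n = - a"
    define c where "c = (e - n * (j - i)) mod ip"
    have cr: "c \<in> {0..<ip}" unfolding c_def using ip_gt1 by simp
    obtain m where "n = int (Suc m)" using 3 unfolding n_def
      by (metis gr0_implies_Suc neg_0_less_iff_less pos_int_cases of_nat_0_less_iff)
    then have PD: "Pn n c \<in> D" using Pn_all[OF b] cr by blast
    have "(c + n * (j - i)) mod ip = e" unfolding c_def using er by (simp add: mod_add_left_eq)
    then have "g \<in> Pn n c" unfolding Pn_def n_def gae by simp
    then have "E = Pn n c" using cls_disj[OF E PD] g by simp
    moreover have "n \<ge> 1" using 3 unfolding n_def by simp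
    ultimately show ?thesis using cr by blast
  qed
qed

lemma case1:
  assumes b: "(i + j) mod ip \<noteq> 0"
  shows "automorphic F p D"
proof (rule automorphic_intro)
  define s where "s = Af p (-1) ((j - i) mod ip) 1"
  have s_sing: "s (0, k) = (0, k)" if "k \<in> {0..<ip}" for k
    using that unfolding s_def Af_def by simp
  have s_P1: "s (n, c) = (- n, (c + n * (j - i)) mod ip)" for n c
  proof -
    have "((j - i) mod ip * n + 1 * c) mod ip = (c + n * ((j - i) mod ip)) mod ip" by (simp add: algebra_simps)
    also have "\<dots> = (c + n * (j - i)) mod ip" by (rule modh)
    finally show ?thesis unfolding s_def Af_def by simp
  qed
  have s_P2: "s (- n, (c + n * (j - i)) mod ip) = (n, c)" if "c \<in> {0..<ip}" for n c
  proof -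
    have "((j - i) mod ip * - n + (c + n * (j - i)) mod ip) mod ip = ((j - i) * - n + (c + n * (j - i))) mod ip"
      by (rule modh4)
    also have "\<dots> = c" using that by (simp add: algebra_simps)
    finally show ?thesis unfolding s_def Af_def by simp
  qed
  have sE: "s ` E = E" if E: "E \<in> D" for E
    using classify1[OF b E]
  proof
    assume "\<exists>k\<in>{0..<ip}. E = {(0, k)}"
    then obtain k where "k \<in> {0..<ip}" "E = {(0, k)}" by blast
    then show ?thesis using s_sing by simp
  next
    assume "\<exists>n c. n \<ge> 1 \<and> c \<in> {0..<ip} \<and> E = Pn n c"
    then obtain n c where "c \<in> {0..<ip}" "E = Pn n c" by blast
    then show ?thesis unfolding Pn_def using s_P1 s_P2 by auto
  qed
  have idE: "Af p 1 0 1 ` E = E" if E: "E \<in> D" for E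
  proof -
    have "\<forall>x\<in>E. Af p 1 0 1 x = x" using Af_id cls_Gc E by blast
    then show ?thesis by simp
  qed
  have sH: "Ar p (-1) ((j - i) mod ip) 1 \<in> Hset p D"
    by (rule HsetI) (use ip_gt1 sE s_def in auto)
  have iH: "Ar p 1 0 1 \<in> Hset p D"
    by (rule HsetI) (use ip_gt1 idE in auto)
  show "\<forall>E\<in>D. \<forall>g\<in>E. \<forall>h\<in>E. \<exists>\<sigma>\<in>Hset p D. \<sigma> g = h"
  proof (intro ballI)
    fix E g h assume E: "E \<in> D" and g: "g \<in> E" and h: "h \<in> E"
    have gG: "g \<in> Gc p" using g E cls_Gc by blast
    show "\<exists>\<sigma>\<in>Hset p D. \<sigma> g = h"
    proof (cases "g = h")
      case True
      have "Ar p 1 0 1 g = h" using True Af_id[OF gG] gG unfolding Ar_def by simp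
      then show ?thesis using iH by blast
    next
      case False
      have "\<exists>n c. c \<in> {0..<ip} \<and> E = Pn n c" using classify1[OF b E] g h False by auto
      then obtain n c where c: "c \<in> {0..<ip}" and EP: "E = Pn n c" by blast
      have "s g = h" using g h False c s_P1 s_P2 unfolding EP Pn_def by auto
      then have "Ar p (-1) ((j - i) mod ip) 1 g = h" using gG unfolding Ar_def s_def by simp
      then show ?thesis using sH by blast
    qed
  qed
qed

end


locale SRC2 = SRC +
  assumes b0: "(i + j) mod ip = 0"
begin

definition br :: "int \<Rightarrow> int \<Rightarrow> int \<times> int" where
  "br n u = (n, (n * i + u) mod ip)"

definition uc :: "int \<times> int \<Rightarrow> int" where
  "uc y = snd y - fst y * i"

lemma fst_br[simp]: "fst (br n u) = n" by (simp add: br_def)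

lemma br_Gc[simp]: "br n u \<in> Gc p" using ip_gt1 by (simp add: br_def Gc_iff)

lemma br_uc: "y \<in> Gc p \<Longrightarrow> br (fst y) (uc y) = y"
  by (cases y) (simp add: br_def uc_def Gc_iff)

lemma br_eq: "br n u = br n' u' \<longleftrightarrow> n = n' \<and> u mod ip = u' mod ip"
proof
  assume h: "br n u = br n' u'"
  then have n: "n = n'" by (simp add: br_def)
  then have "(n * i + u) mod ip = (n * i + u') mod ip" using h by (simp add: br_def)
  then have "u mod ip = u' mod ip" by (simp add: mod_eq_dvd_iff)
  then show "n = n' \<and> u mod ip = u' mod ip" using n by simp
next
  assume h: "n = n' \<and> u mod ip = u' mod ip"
  have "(n * i + u) mod ip = (n * i + u mod ip) mod ip" by (simp add: mod_add_right_eq)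
  also have "\<dots> = (n * i + u' mod ip) mod ip" using h by simp
  also have "\<dots> = (n * i + u') mod ip" by (simp add: mod_add_right_eq)
  finally have "(n * i + u) mod ip = (n * i + u') mod ip" .
  then show "br n u = br n' u'" using h by (simp add: br_def)
qed

lemma br_mod[simp]: "br n (u mod ip) = br n u"
  by (simp add: br_eq)

lemma uc_br: "br n (uc (br n u)) = br n u"
  by (simp add: br_eq uc_def br_def mod_eq_dvd_iff)

lemma uc_br_mod: "uc (br n u) mod ip = u mod ip"
  using uc_br[of n u] by (simp add: br_eq)

lemma dv_br: "dv p (br n u) (br n' u') = br (n' - n) (u' - u)"
proof -
  have "((n' * i + u') mod ip - (n * i + u) mod ip) mod ip = ((n' * i + u') - (n * i + u)) mod ip"
    by (simp add: mod_diff_eq)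
  also have "(n' * i + u') - (n * i + u) = (n' - n) * i + (u' - u)" by (simp add: algebra_simps)
  finally show ?thesis by (simp add: dv_def br_def)
qed

lemma j_eq: "j = (- i) mod ip"
proof -
  have e: "j - (- i) = i + j" by simp
  have "(j - (- i)) mod ip = 0" unfolding e by (rule b0)
  then have "ip dvd (j - (- i))" by (simp only: dvd_eq_mod_eq_0)
  then have "j mod ip = (- i) mod ip" by (simp only: mod_eq_dvd_iff)
  then show ?thesis using ij by simp
qed

lemma C_br: "{br 1 0, br (-1) 0} \<in> D"
proof -
  have "br 1 0 = (1, i)" using ij by (simp add: br_def)
  moreover have "br (-1) 0 = (-1, j)" using j_eq by (simp add: br_def)
  ultimately show ?thesis using Cin by simp
qed

definition up :: "int \<times> int \<Rightarrow> int \<times> int" where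
  "up y = br (fst y + sgn (fst y)) (uc y)"

definition down :: "int \<times> int \<Rightarrow> int \<times> int" where
  "down y = br (fst y - sgn (fst y)) (uc y)"

lemma up_br: "up (br n u) = br (n + sgn n) u"
  using uc_br_mod[of n u] by (simp add: up_def br_eq)

lemma down_br: "down (br n u) = br (n - sgn n) u"
  using uc_br_mod[of n u] by (simp add: down_def br_eq)

lemma down_up: "y \<in> Gc p \<Longrightarrow> fst y \<noteq> 0 \<Longrightarrow> down (up y) = y"
proof -
  assume y: "y \<in> Gc p" "fst y \<noteq> 0"
  obtain n u where "y = br n u" using br_uc[OF y(1)] by metis
  moreover have "sgn (n + sgn n) = sgn n" if "n \<noteq> 0" for n :: int
    using that by (cases "n > 0") (auto simp: sgn_if)
  ultimately show ?thesis using y(2) by (simp add: up_br down_br)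
qed

lemma up_down: "y \<in> Gc p \<Longrightarrow> \<bar>fst y\<bar> \<ge> 2 \<Longrightarrow> up (down y) = y"
proof -
  assume y: "y \<in> Gc p" "\<bar>fst y\<bar> \<ge> 2"
  obtain n u where yn: "y = br n u" using br_uc[OF y(1)] by metis
  have "sgn (n - sgn n) = sgn n" if "\<bar>n\<bar> \<ge> 2" for n :: int
    using that by (cases "n > 0") (auto simp: sgn_if)
  then show ?thesis using y(2) yn by (simp add: up_br down_br)
qed

lemma cls_Gc_mem: "x \<in> Gc p \<Longrightarrow> y \<in> cls x \<Longrightarrow> y \<in> Gc p"
  using cls_in cls_Gc by blast

lemma lev_cls: "x \<in> Gc p \<Longrightarrow> y \<in> cls x \<Longrightarrow> fst y = fst x \<or> fst y = - fst x"
  using cls_in lev by blast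

lemma UP:
  assumes g: "g \<in> Gc p" "\<bar>fst g\<bar> = n" "n \<ge> 1" and h: "h \<in> cls (up g)"
  shows "down h \<in> cls g"
proof -
  obtain a u where gau: "g = br a u" using br_uc[OF g(1)] by metis
  have hG: "h \<in> Gc p" using h cls_Gc_mem br_Gc unfolding up_def by blast
  obtain b v where hbv: "h = br b v" using br_uc[OF hG] by metis
  have upg: "up g = br (a + sgn a) u" using gau up_br by simp
  have bl: "b = a + sgn a \<or> b = - (a + sgn a)" using lev_cls[OF br_Gc h[unfolded upg]] hbv upg by simp
  have y0: "br (sgn a) 0 \<in> {br 1 0, br (-1) 0}" using g gau by (auto simp: sgn_if)
  have "dv p (br (sgn a) 0) (br (a + sgn a) u) = br a u" by (simp add: dv_br)
  then have "dv p (br (sgn a) 0) (up g) = g" using upg gau by simp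
  then have dvin: "dv p (br (sgn a) 0) (up g) \<in> cls g" using cls_in[OF g(1)] by simp
  have upG: "up g \<in> Gc p" unfolding upg by simp
  have c1: "cls g \<in> D" using cls_in[OF g(1)] by blast
  have c2: "cls (up g) \<in> D" "up g \<in> cls (up g)" using cls_in[OF upG] by auto
  obtain y where y: "y \<in> {br 1 0, br (-1) 0}" "dv p y h \<in> cls g"
    using supp[OF C_br c1 c2(1) c2(2) h y0 dvin] by blast
  obtain c where yc: "y = br c 0" "c = 1 \<or> c = -1" using y by blast
  have "dv p y h = br (b - c) v" unfolding yc hbv dv_br by simp
  then have "b - c = a \<or> b - c = - a" using lev_cls[OF g(1) y(2)] gau by simp
  then have "c = sgn b" using bl yc(2) g gau by (auto simp: sgn_if split: if_splits)
  then have "dv p y h = down h" unfolding yc hbv dv_br down_br by simp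
  then show ?thesis using y(2) by simp
qed


lemma DOWN:
  assumes g: "g \<in> Gc p" "\<bar>fst g\<bar> \<ge> 2" and h: "h \<in> cls (down g)"
  shows "up h \<in> cls g"
proof -
  obtain a u where gau: "g = br a u" using br_uc[OF g(1)] by metis
  have dg: "down g = br (a - sgn a) u" using gau down_br by simp
  have dG: "down g \<in> Gc p" unfolding dg by simp
  have hG: "h \<in> Gc p" using h cls_Gc_mem[OF dG] by blast
  obtain b v where hbv: "h = br b v" using br_uc[OF hG] by metis
  have bl: "b = a - sgn a \<or> b = - (a - sgn a)" using lev_cls[OF dG h] hbv dg by simp
  have y0: "br (- sgn a) 0 \<in> {br 1 0, br (-1) 0}" using g gau by (auto simp: sgn_if)
  have "dv p (br (- sgn a) 0) (br (a - sgn a) u) = br a u" by (simp add: dv_br)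
  then have dvin: "dv p (br (- sgn a) 0) (down g) \<in> cls g" using dg gau cls_in[OF g(1)] by simp
  have c1: "cls g \<in> D" using cls_in[OF g(1)] by blast
  have c2: "cls (down g) \<in> D" "down g \<in> cls (down g)" using cls_in[OF dG] by auto
  obtain y where y: "y \<in> {br 1 0, br (-1) 0}" "dv p y h \<in> cls g"
    using supp[OF C_br c1 c2(1) c2(2) h y0 dvin] by blast
  obtain c where yc: "y = br c 0" "c = 1 \<or> c = -1" using y by blast
  have "dv p y h = br (b - c) v" unfolding yc hbv dv_br by simp
  then have "b - c = a \<or> b - c = - a" using lev_cls[OF g(1) y(2)] gau by simp
  then have "c = - sgn b" using bl yc(2) g gau by (auto simp: sgn_if split: if_splits)
  then have "dv p y h = up h" unfolding yc hbv dv_br up_br by simp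
  then show ?thesis using y(2) by simp
qed

lemma UPC:
  assumes g: "g \<in> Gc p" "fst g \<noteq> 0"
  shows "cls (up g) = up ` cls g"
proof
  obtain a u where gau: "g = br a u" using br_uc[OF g(1)] by metis
  have upg: "up g = br (a + sgn a) u" using gau up_br by simp
  have upG: "up g \<in> Gc p" unfolding upg by simp
  have fa: "\<bar>a + sgn a\<bar> = \<bar>a\<bar> + 1" using g gau by (auto simp: sgn_if)
  show "cls (up g) \<subseteq> up ` cls g"
  proof
    fix h assume h: "h \<in> cls (up g)"
    have "down h \<in> cls g" using UP[OF g(1) refl _ h] g by simp
    moreover have "up (down h) = h"
    proof (rule up_down)
      show "h \<in> Gc p" using h cls_Gc_mem[OF upG] by blast
      have "fst h = a + sgn a \<or> fst h = - (a + sgn a)" using lev_cls[OF upG h] upg by simp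
      then show "\<bar>fst h\<bar> \<ge> 2" using fa g gau by auto
    qed
    ultimately show "h \<in> up ` cls g" by (metis image_eqI)
  qed
  show "up ` cls g \<subseteq> cls (up g)"
  proof
    fix h assume "h \<in> up ` cls g"
    then obtain h' where h': "h' \<in> cls g" "h = up h'" by blast
    have "down (up g) = g" using down_up g by simp
    then have "h' \<in> cls (down (up g))" using h' by simp
    moreover have "\<bar>fst (up g)\<bar> \<ge> 2" using fa g gau upg by auto
    ultimately show "h \<in> cls (up g)" using DOWN[OF upG] h' by simp
  qed
qed

lemma LI:
  assumes s: "s = 1 \<or> s = -1" and s': "s' = 1 \<or> s' = -1"
  shows "br (s' * int (Suc m)) u' \<in> cls (br (s * int (Suc m)) u) \<longleftrightarrow> br s' u' \<in> cls (br s u)"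
proof (induction m)
  case 0 then show ?case by simp
next
  case (Suc m)
  define n where "n = int (Suc m)"
  have n1: "n \<ge> 1" unfolding n_def by simp
  have sg: "sgn (s * n) = s" "sgn (s' * n) = s'" using s s' n1 by (auto simp: sgn_if)
  have e1: "up (br (s * n) u) = br (s * int (Suc (Suc m))) u"
    using up_br sg unfolding n_def by (simp add: algebra_simps)
  have e2: "up (br (s' * n) u') = br (s' * int (Suc (Suc m))) u'"
    using up_br sg unfolding n_def by (simp add: algebra_simps)
  have nz: "fst (br (s * n) u) \<noteq> 0" using s n1 by auto
  have "br (s' * int (Suc (Suc m))) u' \<in> cls (br (s * int (Suc (Suc m))) u)
      \<longleftrightarrow> up (br (s' * n) u') \<in> up ` cls (br (s * n) u)"
    using UPC[OF br_Gc nz] e1 e2 by simp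
  also have "\<dots> \<longleftrightarrow> br (s' * n) u' \<in> cls (br (s * n) u)"
  proof
    assume "up (br (s' * n) u') \<in> up ` cls (br (s * n) u)"
    then obtain y where y: "y \<in> cls (br (s * n) u)" "up (br (s' * n) u') = up y" by blast
    have yG: "y \<in> Gc p" using y cls_Gc_mem[OF br_Gc] by blast
    have "fst y \<noteq> 0" using lev_cls[OF br_Gc y(1)] nz by auto
    then have "y = down (up y)" using down_up yG by simp
    also have "\<dots> = down (up (br (s' * n) u'))" using y by simp
    also have "\<dots> = br (s' * n) u'" by (rule down_up) (use s' n1 in auto)
    finally show "br (s' * n) u' \<in> cls (br (s * n) u)" using y by simp
  qed auto
  finally show ?case using Suc unfolding n_def by simp
qed

end


context SRC2
begin

definition Tf :: "int \<Rightarrow> int \<Rightarrow> int \<times> int \<Rightarrow> int \<times> int" where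
  "Tf e m = Af p e (((e - m) * i) mod ip) m"

lemma T_br: "Tf e m (br n u) = br (e * n) (m * u)"
proof -
  have "(((e - m) * i) mod ip * n + m * ((n * i + u) mod ip)) mod ip
      = (((e - m) * i) * n + m * ((n * i + u) mod ip)) mod ip" by (rule modh3)
  also have "\<dots> = (((e - m) * i) * n + m * (n * i + u)) mod ip" by (rule modh)
  also have "((e - m) * i) * n + m * (n * i + u) = (e * n) * i + m * u" by (simp add: algebra_simps)
  finally show ?thesis by (simp add: Tf_def Af_def br_def)
qed

lemma T_comp: "y \<in> Gc p \<Longrightarrow> Tf e1 m1 (Tf e2 m2 y) = Tf (e1 * e2) (m1 * m2) y"
proof -
  assume "y \<in> Gc p"
  then obtain n u where "y = br n u" using br_uc by metis
  then show ?thesis by (simp add: T_br algebra_simps)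
qed

lemma pw_br: "pw p q (br n u) = br (int q * n) (int q * u)"
proof -
  have "(int q * ((n * i + u) mod ip)) mod ip = (int q * (n * i + u)) mod ip" by (simp add: mod_mult_right_eq)
  also have "int q * (n * i + u) = (int q * n) * i + int q * u" by (simp add: algebra_simps)
  finally show ?thesis by (simp add: pw_def br_def)
qed

lemma T_Gc: "Tf e m y \<in> Gc p" unfolding Tf_def using Af_Gc p_pos by blast

lemma T_inj: assumes "e = 1 \<or> e = -1" "\<not> ip dvd m" shows "inj_on (Tf e m) (Gc p)"
proof
  fix x y assume xy: "x \<in> Gc p" "y \<in> Gc p" "Tf e m x = Tf e m y"
  obtain n u where x: "x = br n u" using br_uc[OF xy(1)] by metis
  obtain n' u' where y: "y = br n' u'" using br_uc[OF xy(2)] by metis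
  have "e * n = e * n'" "(m * u) mod ip = (m * u') mod ip" using xy(3) unfolding x y T_br br_eq by auto
  then have nn: "n = n'" using assms(1) by auto
  have "ip dvd m * (u - u')" using \<open>(m * u) mod ip = (m * u') mod ip\<close>
    by (simp add: mod_eq_dvd_iff algebra_simps)
  moreover have "prime ip" using pr by simp
  ultimately have "ip dvd (u - u')" using assms(2) prime_dvd_mult_iff by blast
  then have "u mod ip = u' mod ip" by (simp add: mod_eq_dvd_iff)
  then show "x = y" unfolding x y br_eq using nn by simp
qed

definition closedU :: "(int \<times> int) set \<Rightarrow> bool" where
  "closedU X \<longleftrightarrow> X \<subseteq> Gc p \<and> (\<forall>g\<in>X. cls g \<subseteq> X)"

definition lv01 :: "(int \<times> int) set \<Rightarrow> bool" where
  "lv01 X \<longleftrightarrow> (\<forall>y\<in>X. fst y = 0) \<or> (\<forall>y\<in>X. \<bar>fst y\<bar> = 1)"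

lemma cls_closedU: "X \<in> D \<Longrightarrow> closedU X"
  unfolding closedU_def using cls_Gc cls_eq by blast

lemma lv01_T: "lv01 X \<Longrightarrow> e = 1 \<or> e = -1 \<Longrightarrow> X \<subseteq> Gc p \<Longrightarrow> lv01 (Tf e m ` X)"
proof -
  assume a: "lv01 X" "e = 1 \<or> e = -1" "X \<subseteq> Gc p"
  have f: "fst (Tf e m y) = e * fst y" if "y \<in> Gc p" for y
    using br_uc[OF that] T_br by (metis fst_br)
  show ?thesis using a(1) unfolding lv01_def
  proof (elim disjE)
    assume h: "\<forall>y\<in>X. fst y = 0"
    have "\<forall>z\<in>Tf e m ` X. fst z = 0"
    proof
      fix z assume "z \<in> Tf e m ` X"
      then obtain y where y: "y \<in> X" "z = Tf e m y" by blast
      then have "fst z = e * fst y" using f a(3) by blast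
      then show "fst z = 0" using h y by simp
    qed
    then show "(\<forall>z\<in>Tf e m ` X. fst z = 0) \<or> (\<forall>z\<in>Tf e m ` X. \<bar>fst z\<bar> = 1)" by blast
  next
    assume h: "\<forall>y\<in>X. \<bar>fst y\<bar> = 1"
    have "\<forall>z\<in>Tf e m ` X. \<bar>fst z\<bar> = 1"
    proof
      fix z assume "z \<in> Tf e m ` X"
      then obtain y where y: "y \<in> X" "z = Tf e m y" by blast
      then have "fst z = e * fst y" using f a(3) by blast
      then show "\<bar>fst z\<bar> = 1" using h y a(2) by (auto simp: abs_mult)
    qed
    then show "(\<forall>z\<in>Tf e m ` X. fst z = 0) \<or> (\<forall>z\<in>Tf e m ` X. \<bar>fst z\<bar> = 1)" by blast
  qed
qed

lemma GM1:
  assumes X: "X \<in> D" "lv01 X" and q: "prime q" "q \<noteq> p"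
  shows "closedU (Tf 1 (int q) ` X)"
  unfolding closedU_def
proof (intro conjI ballI subsetI)
  fix g assume "g \<in> Tf 1 (int q) ` X" then show "g \<in> Gc p" using T_Gc by blast
next
  fix g h assume g: "g \<in> Tf 1 (int q) ` X" and h: "h \<in> cls g"
  obtain y where y: "y \<in> X" "g = Tf 1 (int q) y" using g by blast
  have yG: "y \<in> Gc p" using y X cls_Gc by blast
  obtain n u where ynu: "y = br n u" using br_uc[OF yG] by metis
  have gG: "g \<in> Gc p" using y T_Gc by simp
  have hG: "h \<in> Gc p" using h cls_Gc_mem[OF gG] by blast
  obtain n' v where hv: "h = br n' v" using br_uc[OF hG] by metis
  have q1: "int q \<ge> 2" using q prime_ge_2_nat by simp
  obtain mq where "q = Suc mq" using q(1) prime_gt_0_nat gr0_implies_Suc by blast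
  then have mq: "int q = int (Suc mq)" by simp
  show "h \<in> Tf 1 (int q) ` X"
  proof (cases "n = 0")
    case True
    then have "g = br 0 (int q * u)" using y ynu T_br by simp
    moreover have "pw p q y = br 0 (int q * u)" using ynu True pw_br by simp
    ultimately have gpw: "g \<in> pw p q ` X" using y by (metis image_eqI)
    have "h \<in> pw p q ` X" using mult_union[OF X(1) q cls_in[OF gG, THEN conjunct1] cls_in[OF gG, THEN conjunct2] h gpw] .
    then obtain z where z: "z \<in> X" "h = pw p q z" by blast
    have zG: "z \<in> Gc p" using z X cls_Gc by blast
    obtain n2 u2 where znu: "z = br n2 u2" using br_uc[OF zG] by metis
    have "n2 = 0" using X(2) z y ynu True znu unfolding lv01_def by auto
    then have "h = Tf 1 (int q) z" using z znu pw_br T_br by simp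
    then show ?thesis using z by blast
  next
    case False
    then have n1: "n = 1 \<or> n = -1" using X(2) y ynu unfolding lv01_def by auto
    have gb: "g = br n (int q * u)" using y ynu T_br by simp
    have nl: "n' = n \<or> n' = - n" using lev_cls[OF gG h] gb hv by simp
    then have n'1: "n' = 1 \<or> n' = -1" using n1 by auto
    have "br n' v \<in> cls (br n (int q * u))" using h hv gb by simp
    then have "br (n' * int (Suc mq)) v \<in> cls (br (n * int (Suc mq)) (int q * u))"
      using LI[OF n1 n'1] by blast
    then have hin: "br (int q * n') v \<in> cls (pw p q y)" using mq ynu pw_br by (simp add: mult.commute)
    have pG: "pw p q y \<in> Gc p" unfolding ynu pw_br by simp
    have gpw: "pw p q y \<in> pw p q ` X" using y by blast
    have "br (int q * n') v \<in> pw p q ` X"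
      using mult_union[OF X(1) q cls_in[OF pG, THEN conjunct1] cls_in[OF pG, THEN conjunct2] hin gpw] .
    then obtain z where z: "z \<in> X" "br (int q * n') v = pw p q z" by blast
    have zG: "z \<in> Gc p" using z X cls_Gc by blast
    obtain n2 u2 where znu: "z = br n2 u2" using br_uc[OF zG] by metis
    have "br (int q * n') v = br (int q * n2) (int q * u2)" using z znu pw_br by simp
    then have "n2 = n'" "v mod ip = (int q * u2) mod ip" using q1 unfolding br_eq by auto
    then have "h = Tf 1 (int q) z" using hv znu T_br br_eq by simp
    then show ?thesis using z by blast
  qed
qed


lemma lv01_sub: "lv01 X \<Longrightarrow> Y \<subseteq> X \<Longrightarrow> lv01 Y"
  unfolding lv01_def by blast

lemma GM1U:
  assumes Y: "closedU Y" "lv01 Y" and q: "prime q" "q \<noteq> p"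
  shows "closedU (Tf 1 (int q) ` Y)"
  unfolding closedU_def
proof (intro conjI ballI subsetI)
  fix g assume "g \<in> Tf 1 (int q) ` Y" then show "g \<in> Gc p" using T_Gc by blast
next
  fix g h assume g: "g \<in> Tf 1 (int q) ` Y" and h: "h \<in> cls g"
  obtain y where y: "y \<in> Y" "g = Tf 1 (int q) y" using g by blast
  have yG: "y \<in> Gc p" using y Y(1) unfolding closedU_def by blast
  have cy: "cls y \<in> D" "y \<in> cls y" using cls_in[OF yG] by auto
  have sub: "cls y \<subseteq> Y" using Y(1) y unfolding closedU_def by blast
  have "closedU (Tf 1 (int q) ` cls y)" using GM1[OF cy(1) lv01_sub[OF Y(2) sub] q] .
  moreover have "g \<in> Tf 1 (int q) ` cls y" using y cy by blast
  ultimately have "h \<in> Tf 1 (int q) ` cls y" using h unfolding closedU_def by blast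
  then show "h \<in> Tf 1 (int q) ` Y" using sub by blast
qed

lemma T_one: "y \<in> Gc p \<Longrightarrow> Tf 1 1 y = y"
  using br_uc T_br by (metis mult_1)

lemma GM2:
  assumes X: "X \<in> D" "lv01 X"
  shows "m \<ge> 1 \<Longrightarrow> \<not> p dvd m \<Longrightarrow> closedU (Tf 1 (int m) ` X)"
proof (induction m rule: less_induct)
  case (less m)
  show ?case
  proof (cases "m = 1")
    case True
    have "Tf 1 (int m) ` X = X"
    proof -
      have "\<forall>y\<in>X. Tf 1 (int m) y = y" using T_one True cls_Gc X by auto
      then show ?thesis by simp
    qed
    then show ?thesis using cls_closedU[OF X(1)] by simp
  next
    case False
    obtain q where q: "prime q" "q dvd m" using prime_factor_nat False by blast
    obtain m' where m': "m = q * m'" using q(2) by (elim dvdE)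
    have q1: "q > 1" using q prime_gt_1_nat by blast
    have m'1: "m' \<ge> 1" using less.prems m' by (cases m') auto
    have m'l: "m' < m" using m' q1 m'1 by simp
    have m'p: "\<not> p dvd m'" using less.prems m' by (metis dvd_mult)
    have qp: "q \<noteq> p" using less.prems q by blast
    have IH: "closedU (Tf 1 (int m') ` X)" using less.IH[OF m'l m'1 m'p] .
    have lv: "lv01 (Tf 1 (int m') ` X)" using lv01_T[OF X(2)] cls_Gc[OF X(1)] by blast
    have "closedU (Tf 1 (int q) ` Tf 1 (int m') ` X)" using GM1U[OF IH lv q(1) qp] .
    moreover have "Tf 1 (int q) ` Tf 1 (int m') ` X = Tf 1 (int m) ` X"
    proof -
      have "\<forall>y\<in>X. Tf 1 (int q) (Tf 1 (int m') y) = Tf 1 (int m) y"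
        using T_comp cls_Gc[OF X(1)] m' by auto
      then show ?thesis by (simp add: image_image)
    qed
    ultimately show ?thesis by simp
  qed
qed

lemma T_inv_id:
  assumes "(a * b) mod ip = 1" "y \<in> Gc p"
  shows "Tf 1 a (Tf 1 b y) = y"
proof -
  obtain n u where y: "y = br n u" using br_uc[OF assms(2)] by metis
  have "(a * b * u) mod ip = ((a * b) mod ip * u) mod ip" by (simp add: mod_mult_left_eq)
  also have "\<dots> = u mod ip" using assms(1) by simp
  finally have h: "(a * b * u) mod ip = u mod ip" .
  show ?thesis unfolding y T_comp[OF br_Gc] T_br br_eq using h by (simp add: mult.assoc)
qed

lemma inv_nat:
  assumes "m \<ge> 1" "\<not> p dvd m"
  obtains m' where "m' \<ge> 1" "\<not> p dvd m'" "(int m * int m') mod ip = 1" "(int m' * int m) mod ip = 1"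
proof -
  have "coprime p m" using prime_imp_coprime_nat[OF pr assms(2)] .
  then have "coprime m p" by (simp add: coprime_commute)
  then obtain x where x: "[m * x = Suc 0] (mod p)" using cong_solve_coprime_nat by blast
  then have x1: "(m * x) mod p = 1" using p_gt1 unfolding cong_def by simp
  have "x \<noteq> 0"
  proof
    assume "x = 0" then show False using x1 by simp
  qed
  moreover have "\<not> p dvd x" using x1 p_gt1 by (metis dvd_mult mod_0_imp_dvd dvd_imp_mod_0 one_neq_zero dvd_mod_iff)
  moreover have mx: "(int m * int x) mod ip = 1" using x1 by (metis of_nat_mult of_nat_mod of_nat_1)
  moreover have "(int x * int m) mod ip = 1" using mx by (simp add: mult.commute)
  ultimately show ?thesis by (intro that[of x]) auto
qed

lemma GM3:
  assumes X: "X \<in> D" "lv01 X" and m: "m \<ge> 1" "\<not> p dvd m"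
  shows "Tf 1 (int m) ` X \<in> D"
proof -
  obtain m' where m': "m' \<ge> 1" "\<not> p dvd m'" "(int m * int m') mod ip = 1" "(int m' * int m) mod ip = 1"
    using inv_nat[OF m] by blast
  obtain x0 where x0: "x0 \<in> X" using cls_ne[OF X(1)] by blast
  have XG: "X \<subseteq> Gc p" using cls_Gc[OF X(1)] .
  define g where "g = Tf 1 (int m) x0"
  have gG: "g \<in> Gc p" unfolding g_def using T_Gc by simp
  define Z where "Z = cls g"
  have Z: "Z \<in> D" "g \<in> Z" unfolding Z_def using cls_in[OF gG] by auto
  have cU: "closedU (Tf 1 (int m) ` X)" using GM2[OF X m] .
  have ZS: "Z \<subseteq> Tf 1 (int m) ` X" using cU x0 unfolding Z_def g_def closedU_def by blast
  have lvZ: "lv01 Z" using lv01_sub[OF lv01_T[OF X(2) _ XG] ZS] by simp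
  have cW: "closedU (Tf 1 (int m') ` Z)" using GM2[OF Z(1) lvZ m'(1,2)] .
  have WX: "Tf 1 (int m') ` Z \<subseteq> X"
  proof
    fix w assume "w \<in> Tf 1 (int m') ` Z"
    then obtain z where z: "z \<in> Z" "w = Tf 1 (int m') z" by blast
    then obtain y where y: "y \<in> X" "z = Tf 1 (int m) y" using ZS by blast
    have "Tf 1 (int m') (Tf 1 (int m) y) = y" using T_inv_id[OF m'(4)] XG y(1) by blast
    then have "w = y" using z(2) y(2) by simp
    then show "w \<in> X" using y by simp
  qed
  have "x0 \<in> Tf 1 (int m') ` Z"
  proof -
    have "Tf 1 (int m') g = x0" unfolding g_def using T_inv_id[OF m'(4)] XG x0 by blast
    then show ?thesis using Z by (metis image_eqI)
  qed
  then have "cls x0 \<subseteq> Tf 1 (int m') ` Z" using cW unfolding closedU_def by blast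
  moreover have "cls x0 = X" using cls_eq[OF X(1) x0] .
  ultimately have WXe: "Tf 1 (int m') ` Z = X" using WX by blast
  have "Tf 1 (int m) ` X = Tf 1 (int m) ` Tf 1 (int m') ` Z" using WXe by simp
  also have "\<dots> = Z"
  proof -
    have "\<forall>z\<in>Z. Tf 1 (int m) (Tf 1 (int m') z) = z" using T_inv_id[OF m'(3)] cls_Gc[OF Z(1)] by blast
    then show ?thesis by (simp add: image_image)
  qed
  finally show ?thesis using Z by simp
qed

lemma D1:
  assumes X: "X \<in> D" "\<forall>y\<in>X. \<bar>fst y\<bar> = 1" and y: "y \<in> X" "y' \<in> X"
  shows "br 0 (uc y') \<in> cls (br 0 (uc y))"
proof -
  have yG: "y \<in> Gc p" "y' \<in> Gc p" using y X cls_Gc by auto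
  have B: "cls (br 0 (uc y)) \<in> D" "br 0 (uc y) \<in> cls (br 0 (uc y))" using cls_in[OF br_Gc] by auto
  have y0: "br (fst y) 0 \<in> {br 1 0, br (-1) 0}" using X(2) y by (auto simp: abs_if split: if_splits)
  have "dv p (br (fst y) 0) y = br 0 (uc y)"
    using br_uc[OF yG(1)] dv_br by (metis add.right_neutral diff_self diff_zero)
  then have "dv p (br (fst y) 0) y \<in> cls (br 0 (uc y))" using B by simp
  then obtain c where c: "c \<in> {br 1 0, br (-1) 0}" "dv p c y' \<in> cls (br 0 (uc y))"
    using supp[OF C_br B(1) X(1) y(1) y(2) y0] by blast
  obtain s where cs: "c = br s 0" using c by blast
  have "dv p c y' = br (fst y' - s) (uc y')" using br_uc[OF yG(2)] cs dv_br by (metis diff_zero)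
  moreover have "fst (dv p c y') = 0" using lev_cls[OF br_Gc c(2)] by simp
  ultimately show ?thesis using c(2) by simp
qed

lemma card2: "a \<noteq> b \<Longrightarrow> card ({a, b} \<inter> X) = (if a \<in> X then 1 else 0) + (if b \<in> X then 1 else 0)"
  by (cases "a \<in> X"; cases "b \<in> X") (auto simp: Int_insert_left)

lemma D2:
  assumes X: "X \<in> D" "\<forall>y\<in>X. \<bar>fst y\<bar> = 1" and v: "br 0 v' \<in> cls (br 0 v)"
  shows "card ({br 1 v, br (-1) v} \<inter> X) = card ({br 1 v', br (-1) v'} \<inter> X)"
proof -
  have set_eq: "{y\<in>X. dv p y (br 0 w) \<in> {br 1 0, br (-1) 0}} = {br 1 w, br (-1) w} \<inter> X" for w
  proof
    show "{y\<in>X. dv p y (br 0 w) \<in> {br 1 0, br (-1) 0}} \<subseteq> {br 1 w, br (-1) w} \<inter> X"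
    proof
      fix y assume y: "y \<in> {y\<in>X. dv p y (br 0 w) \<in> {br 1 0, br (-1) 0}}"
      then have yG: "y \<in> Gc p" using X cls_Gc by blast
      obtain n u where ynu: "y = br n u" using br_uc[OF yG] by metis
      have "br (0 - n) (w - u) \<in> {br 1 0, br (-1) 0}" using y ynu dv_br by simp
      then have "(w - u) mod ip = 0" by (auto simp: br_eq)
      then have "ip dvd (w - u)" by (simp only: dvd_eq_mod_eq_0)
      then have "w mod ip = u mod ip" by (simp only: mod_eq_dvd_iff)
      then have "u mod ip = w mod ip" by simp
      moreover have "n = 1 \<or> n = -1" using X(2) y ynu by auto
      ultimately show "y \<in> {br 1 w, br (-1) w} \<inter> X" using y ynu br_eq by auto
    qed
    show "{br 1 w, br (-1) w} \<inter> X \<subseteq> {y\<in>X. dv p y (br 0 w) \<in> {br 1 0, br (-1) 0}}"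
      using dv_br by auto
  qed
  have "card {y\<in>X. dv p y (br 0 v) \<in> {br 1 0, br (-1) 0}} = card {y\<in>X. dv p y (br 0 v') \<in> {br 1 0, br (-1) 0}}"
    using count_const[OF X(1) C_br cls_in[OF br_Gc, THEN conjunct1] cls_in[OF br_Gc, THEN conjunct2] v] .
  then show ?thesis using set_eq by simp
qed

end


context SRC2
begin

abbreviation "S \<equiv> Tf (-1) 1"

definition lev1 :: "(int \<times> int) set \<Rightarrow> bool" where
  "lev1 X \<longleftrightarrow> (\<forall>y\<in>X. \<bar>fst y\<bar> = 1)"

lemma uc_br0: "br 0 (uc (br n u)) = br 0 u"
  using uc_br_mod[of n u] br_eq by simp

lemma br_pm: "br 1 v \<noteq> br (-1) v" by (simp add: br_eq)

lemma S_br: "S (br n u) = br (- n) u" using T_br by simp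

lemma pick_other:
  assumes "card ({br 1 v, br (-1) v} \<inter> W) = 1" "br s v \<notin> W" "s = 1 \<or> s = -1"
  shows "br (- s) v \<in> W"
proof -
  have c: "(if br 1 v \<in> W then 1 else 0) + (if br (-1) v \<in> W then 1 else 0) = (1::nat)"
    using assms(1) card2[OF br_pm, of v W] by simp
  show ?thesis using assms(3)
  proof
    assume s: "s = 1"
    then have "br 1 v \<notin> W" using assms(2) by simp
    then show ?thesis using c s by (cases "br (-1) v \<in> W") auto
  next
    assume s: "s = -1"
    then have "br (-1) v \<notin> W" using assms(2) by simp
    then show ?thesis using c s by (cases "br 1 v \<in> W") auto
  qed
qed

lemma both_in:
  assumes "br s v \<in> X" "br (- s) v \<in> X" "s = 1 \<or> s = -1"
  shows "card ({br 1 v, br (-1) v} \<inter> X) = 2"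
proof -
  have "br 1 v \<in> X \<and> br (-1) v \<in> X" using assms by auto
  then show ?thesis using card2[OF br_pm, of v X] by simp
qed

lemma both_of2:
  assumes "card ({br 1 v, br (-1) v} \<inter> X) = 2"
  shows "br 1 v \<in> X" "br (-1) v \<in> X"
proof -
  have c: "(if br 1 v \<in> X then 1 else 0) + (if br (-1) v \<in> X then 1 else 0) = (2::nat)"
    using assms card2[OF br_pm, of v X] by simp
  show "br 1 v \<in> X" using c by (cases "br 1 v \<in> X"; cases "br (-1) v \<in> X") auto
  show "br (-1) v \<in> X" using c by (cases "br 1 v \<in> X"; cases "br (-1) v \<in> X") auto
qed

lemma cnt_ge1:
  assumes X: "X \<in> D" "lev1 X" and y: "y \<in> X"
  shows "card ({br 1 (uc y), br (-1) (uc y)} \<inter> X) \<ge> 1"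
proof -
  have yG: "y \<in> Gc p" using X y cls_Gc by blast
  have "y = br (fst y) (uc y)" using br_uc[OF yG] by simp
  moreover have "fst y = 1 \<or> fst y = -1" using X(2) y unfolding lev1_def by auto
  ultimately have "y \<in> {br 1 (uc y), br (-1) (uc y)} \<inter> X" using y by auto
  then show ?thesis by (metis One_nat_def Suc_leI card_gt_0_iff empty_iff finite.emptyI finite.insertI finite_Int)
qed

lemma DI:
  assumes X: "X \<in> D" "lev1 X" and W: "W \<in> D" "lev1 W" and x: "x \<in> X" and w: "w \<in> W"
    and xw: "br 0 (uc x) \<in> cls (br 0 (uc w))"
  shows "X = W \<or> X = S ` W"
proof (cases "X = W")
  case True then show ?thesis by simp
next
  case False
  then have disj: "X \<inter> W = {}" using X W cls_disj by blast
  define T where "T = cls (br 0 (uc w))"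
  have TD: "T \<in> D" unfolding T_def using cls_in[OF br_Gc] by blast
  have "br 0 (uc x) \<in> T" using xw T_def by simp
  then have "cls (br 0 (uc x)) = T" by (rule cls_eq[OF TD])
  then have Tx: "T = cls (br 0 (uc x))" by simp
  define cX where "cX v = card ({br 1 v, br (-1) v} \<inter> X)" for v
  define cW where "cW v = card ({br 1 v, br (-1) v} \<inter> W)" for v
  have cXc: "cX v = cX (uc x)" if "br 0 v \<in> T" for v
    unfolding cX_def using D2[OF X(1) X(2)[unfolded lev1_def]] that Tx by simp
  have cWc: "cW v = cW (uc w)" if "br 0 v \<in> T" for v
    unfolding cW_def using D2[OF W(1) W(2)[unfolded lev1_def]] that T_def by simp
  have uxT: "br 0 (uc x) \<in> T" using xw T_def by simp
  have X1: "cX (uc x) \<ge> 1" unfolding cX_def using cnt_ge1[OF X x] .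
  have W1: "cW (uc w) \<ge> 1" unfolding cW_def using cnt_ge1[OF W w] .
  have sum2: "cX v + cW v \<le> 2" for v
  proof -
    have "cX v + cW v = card (({br 1 v, br (-1) v} \<inter> X) \<union> ({br 1 v, br (-1) v} \<inter> W))"
      unfolding cX_def cW_def using disj by (subst card_Un_disjoint) auto
    also have "\<dots> \<le> card {br 1 v, br (-1) v}" by (rule card_mono) auto
    also have "\<dots> \<le> 2" by (simp add: card_insert_le_m1)
    finally show ?thesis .
  qed
  have one: "cX v = 1 \<and> cW v = 1" if "br 0 v \<in> T" for v
  proof -
    have "cX (uc x) + cW (uc x) \<le> 2" using sum2 .
    moreover have "cW (uc x) = cW (uc w)" using cWc uxT by simp
    ultimately have "cX (uc x) = 1" "cW (uc w) = 1" using X1 W1 by auto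
    then show ?thesis using cXc cWc that by simp
  qed
  have XT: "br 0 (uc y) \<in> T" if "y \<in> X" for y using D1[OF X(1) X(2)[unfolded lev1_def] x that] Tx by simp
  have WT: "br 0 (uc y) \<in> T" if "y \<in> W" for y using D1[OF W(1) W(2)[unfolded lev1_def] w that] T_def by simp
  have "X = S ` W"
  proof
    show "X \<subseteq> S ` W"
    proof
      fix y assume y: "y \<in> X"
      have yG: "y \<in> Gc p" using X y cls_Gc by blast
      define v where "v = uc y"
      have yb: "y = br (fst y) v" unfolding v_def using br_uc[OF yG] by simp
      have fy: "fst y = 1 \<or> fst y = -1" using X(2) y unfolding lev1_def by auto
      have o: "cX v = 1" "cW v = 1" using one XT[OF y] unfolding v_def by auto
      have yX: "br (fst y) v \<in> X" using y yb[symmetric] by simp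
      have "y \<notin> W" using y disj by blast
      then have "br (fst y) v \<notin> W" using yb[symmetric] by simp
      then have "br (- fst y) v \<in> W" using pick_other[OF o(2)[unfolded cW_def]] fy by blast
      moreover have "S (br (- fst y) v) = y" using yb[symmetric] S_br by simp
      ultimately show "y \<in> S ` W" by (metis image_eqI)
    qed
    show "S ` W \<subseteq> X"
    proof
      fix z assume "z \<in> S ` W"
      then obtain y where y: "y \<in> W" "z = S y" by blast
      have yG: "y \<in> Gc p" using W y cls_Gc by blast
      define v where "v = uc y"
      have yb: "y = br (fst y) v" unfolding v_def using br_uc[OF yG] by simp
      have fy: "fst y = 1 \<or> fst y = -1" using W(2) y unfolding lev1_def by auto
      have o: "cX v = 1" "cW v = 1" using one WT[OF y(1)] unfolding v_def by auto
      have "y \<notin> X" using y disj by blast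
      then have "br (fst y) v \<notin> X" using yb[symmetric] by simp
      then have "br (- fst y) v \<in> X" using pick_other[OF o(1)[unfolded cX_def]] fy by blast
      moreover have "z = br (- fst y) v" using y(2) yb S_br by metis
      ultimately show "z \<in> X" by simp
    qed
  qed
  then show ?thesis by simp
qed

lemma S_inj: "inj_on S (Gc p)"
  using T_inj[of "-1" 1] ip_gt1 by (simp add: zdvd_not_zless)

lemma GS:
  assumes X: "X \<in> D" "lev1 X"
  shows "S ` X \<in> D"
proof -
  obtain x where x: "x \<in> X" using cls_ne[OF X(1)] by blast
  have xG: "x \<in> Gc p" using X x cls_Gc by blast
  define v where "v = uc x"
  have xb: "x = br (fst x) v" unfolding v_def using br_uc[OF xG] by simp
  have fx: "fst x = 1 \<or> fst x = -1" using X(2) x unfolding lev1_def by auto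
  have Sx: "S x = br (- fst x) v" using xb S_br by metis
  have SxG: "S x \<in> Gc p" using T_Gc by simp
  define X' where "X' = cls (S x)"
  have X': "X' \<in> D" "S x \<in> X'" unfolding X'_def using cls_in[OF SxG] by auto
  have lX': "lev1 X'" unfolding lev1_def
  proof
    fix y assume "y \<in> X'"
    then have "fst y = fst (S x) \<or> fst y = - fst (S x)" using lev[OF X'(1) X'(2)] by simp
    then show "\<bar>fst y\<bar> = 1" using Sx fx by auto
  qed
  have "br 0 (uc (S x)) \<in> cls (br 0 (uc x))"
  proof -
    have "br 0 (uc (S x)) = br 0 (uc x)" using Sx uc_br0 v_def by simp
    then show ?thesis using cls_in[OF br_Gc] by simp
  qed
  then have "X' = X \<or> X' = S ` X" using DI[OF X'(1) lX' X X'(2) x] by simp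
  then show ?thesis
  proof
    assume "X' = S ` X" then show ?thesis using X' by simp
  next
    assume "X' = X"
    then have SxX: "S x \<in> X" using X' by simp
    have "br (fst x) v \<in> X" using x xb[symmetric] by simp
    moreover have "br (- fst x) v \<in> X" using SxX Sx by simp
    ultimately have c2: "card ({br 1 v, br (-1) v} \<inter> X) = 2" using both_in fx by blast
    have sub: "S ` X \<subseteq> X"
    proof
      fix z assume "z \<in> S ` X"
      then obtain y where y: "y \<in> X" "z = S y" by blast
      have yG: "y \<in> Gc p" using X y cls_Gc by blast
      have yb: "y = br (fst y) (uc y)" using br_uc[OF yG] by simp
      have fy: "fst y = 1 \<or> fst y = -1" using X(2) y unfolding lev1_def by auto
      have "br 0 (uc y) \<in> cls (br 0 v)" using D1[OF X(1) X(2)[unfolded lev1_def] x y(1)] v_def by simp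
      then have "card ({br 1 (uc y), br (-1) (uc y)} \<inter> X) = 2"
        using D2[OF X(1) X(2)[unfolded lev1_def]] c2 by simp
      then have "br 1 (uc y) \<in> X" "br (-1) (uc y) \<in> X" using both_of2 by blast+
      moreover have "z = br (- fst y) (uc y)" using y(2) yb S_br by metis
      ultimately show "z \<in> X" using fy by auto
    qed
    have "card (S ` X) = card X"
      using card_image[OF inj_on_subset[OF S_inj cls_Gc[OF X(1)]]] .
    then have "S ` X = X" using card_subset_eq[OF cls_fin[OF X(1)] sub] by simp
    then show ?thesis using X by simp
  qed
qed

lemma GT:
  assumes X: "X \<in> D" "lv01 X" and e: "e = 1 \<or> e = -1" and m: "m \<ge> 1" "\<not> p dvd m"
  shows "Tf e (int m) ` X \<in> D"
proof (cases "e = 1")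
  case True then show ?thesis using GM3[OF X m] by simp
next
  case False
  then have e1: "e = -1" using e by simp
  define Y where "Y = Tf 1 (int m) ` X"
  have YD: "Y \<in> D" unfolding Y_def using GM3[OF X m] .
  have lY: "lv01 Y" unfolding Y_def using lv01_T[OF X(2) _ cls_Gc[OF X(1)]] by simp
  have eq: "Tf e (int m) ` X = S ` Y"
  proof -
    have "\<forall>y\<in>X. Tf e (int m) y = S (Tf 1 (int m) y)" using T_comp cls_Gc[OF X(1)] e1 by auto
    then show ?thesis unfolding Y_def by (simp add: image_image)
  qed
  show ?thesis using lY unfolding lv01_def
  proof (elim disjE)
    assume l0: "\<forall>y\<in>Y. fst y = 0"
    have "\<forall>y\<in>Y. S y = y"
    proof
      fix y assume y: "y \<in> Y"
      have yG: "y \<in> Gc p" using YD y cls_Gc by blast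
      have "y = br 0 (uc y)" using br_uc[OF yG] l0 y by metis
      then show "S y = y" using S_br by (metis minus_zero)
    qed
    then have "S ` Y = Y" by simp
    then show ?thesis using eq YD by simp
  next
    assume "\<forall>y\<in>Y. \<bar>fst y\<bar> = 1"
    then have "lev1 Y" unfolding lev1_def .
    then show ?thesis using eq GS[OF YD] by simp
  qed
qed

end


context SRC2
begin

abbreviation "W0 \<equiv> cls (br 1 1)"
abbreviation "T1 \<equiv> cls (br 0 1)"

lemma W0D: "W0 \<in> D" "br 1 1 \<in> W0" using cls_in[OF br_Gc] by auto
lemma T1D: "T1 \<in> D" "br 0 1 \<in> T1" using cls_in[OF br_Gc] by auto

lemma lev1_cls: assumes "g \<in> Gc p" "\<bar>fst g\<bar> = 1" shows "lev1 (cls g)"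
  unfolding lev1_def using lev_cls[OF assms(1)] assms(2) by fastforce

lemma lev0_cls: assumes "g \<in> Gc p" "fst g = 0" shows "\<forall>y\<in>cls g. fst y = 0"
  using lev_cls[OF assms(1)] assms(2) by fastforce

lemma lev1_W0: "lev1 W0" using lev1_cls[OF br_Gc] by simp
lemma lv01_W0: "lv01 W0" using lev1_W0 unfolding lv01_def lev1_def by blast
lemma lv01_T1: "lv01 T1" using lev0_cls[OF br_Gc] unfolding lv01_def by simp

lemma unat:
  assumes "u mod ip \<noteq> 0"
  shows "nat (u mod ip) \<ge> 1" "\<not> p dvd nat (u mod ip)" "int (nat (u mod ip)) = u mod ip"
proof -
  have r: "0 \<le> u mod ip" "u mod ip < ip" using ip_gt1 by auto
  show "int (nat (u mod ip)) = u mod ip" using r by simp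
  show "nat (u mod ip) \<ge> 1" using r assms by linarith
  show "\<not> p dvd nat (u mod ip)"
  proof
    assume "p dvd nat (u mod ip)"
    moreover have "0 < nat (u mod ip)" using assms r by linarith
    ultimately have "p \<le> nat (u mod ip)" by (rule dvd_imp_le)
    then show False using r by linarith
  qed
qed

lemma T_br_nat: "u mod ip \<noteq> 0 \<Longrightarrow> Tf e (int (nat (u mod ip))) (br n v) = br (e * n) (u * v)"
  using unat T_br br_eq by (simp add: mod_mult_left_eq)

lemma int_dvd_nat: "\<not> p dvd m \<Longrightarrow> \<not> ip dvd int m" by simp

lemma C_cls: "cls (br s 0) = {br 1 0, br (-1) 0}" if "s = 1 \<or> s = -1"
proof -
  have "br s 0 \<in> {br 1 0, br (-1) 0}" using that by auto
  then show ?thesis by (rule cls_eq[OF C_br])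
qed

lemma zero_cls: "cls (0, 0) = {(0, 0)}" using cls_eq[OF cls_zero] by simp

lemma br00: "br 0 u = (0, 0) \<longleftrightarrow> u mod ip = 0"
  by (simp add: br_def)

lemma Pt1:
  assumes e: "e = 1 \<or> e = -1" and m: "m \<ge> 1" "\<not> p dvd m" and W: "br e (int m) \<in> W0"
    and y: "y \<in> Gc p" "\<bar>fst y\<bar> \<le> 1"
  shows "Tf e (int m) y \<in> cls y"
proof -
  define a where "a = fst y"
  define u where "u = uc y"
  have yb: "y = br a u" unfolding a_def u_def using br_uc[OF y(1)] by simp
  have bm: "br 0 (int m) \<in> T1"
    using D1[OF W0D(1) lev1_W0[unfolded lev1_def] W0D(2) W] uc_br0 by simp
  consider "a = 0" | "a = 1 \<or> a = -1" using y(2) a_def by linarith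
  then show ?thesis
  proof cases
    case 1
    show ?thesis
    proof (cases "u mod ip = 0")
      case True
      then have "y = (0, 0)" using yb 1 br00 by simp
      moreover have "Tf e (int m) (0, 0) = (0, 0)"
      proof -
        have z: "br 0 0 = (0, 0)" using br00 by simp
        have "Tf e (int m) (br 0 0) = br 0 0" using T_br[of e "int m" 0 0] by simp
        then show ?thesis using z by simp
      qed
      ultimately show ?thesis using zero_cls by simp
    next
      case False
      define un where "un = nat (u mod ip)"
      have un: "un \<ge> 1" "\<not> p dvd un" using unat[OF False] un_def by auto
      have GD: "Tf 1 (int un) ` T1 \<in> D" using GT[OF T1D(1) lv01_T1 _ un] by simp
      have "Tf 1 (int un) (br 0 1) = y" unfolding un_def using T_br_nat[OF False] yb 1 by simp
      then have "y \<in> Tf 1 (int un) ` T1" using T1D(2) by (metis image_eqI)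
      then have eq: "cls y = Tf 1 (int un) ` T1" by (rule cls_eq[OF GD])
      have t1: "Tf 1 (int un) (br 0 (int m)) = br 0 (u * int m)"
        unfolding un_def using T_br_nat[OF False, of 1 0 "int m"] by simp
      have t2: "Tf e (int m) y = br 0 (int m * u)" using yb 1 T_br by simp
      have "Tf 1 (int un) (br 0 (int m)) = Tf e (int m) y" using t1 t2 by (simp add: mult.commute)
      then show ?thesis using eq bm by (metis image_eqI)
    qed
  next
    case 2
    show ?thesis
    proof (cases "u mod ip = 0")
      case True
      then have "y = br a 0" using yb br_eq by simp
      then have "cls y = {br 1 0, br (-1) 0}" using C_cls 2 by simp
      moreover have "Tf e (int m) y = br (e * a) 0" using \<open>y = br a 0\<close> T_br by simp
      moreover have "br (e * a) 0 \<in> {br 1 0, br (-1) 0}" using e 2 by (elim disjE) simp_all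
      ultimately show ?thesis by simp
    next
      case False
      define un where "un = nat (u mod ip)"
      have un: "un \<ge> 1" "\<not> p dvd un" using unat[OF False] un_def by auto
      have GD: "Tf a (int un) ` W0 \<in> D" using GT[OF W0D(1) lv01_W0 2 un] .
      have "Tf a (int un) (br 1 1) = y" unfolding un_def using T_br_nat[OF False] yb by simp
      then have "y \<in> Tf a (int un) ` W0" using W0D(2) by (metis image_eqI)
      then have eq: "cls y = Tf a (int un) ` W0" by (rule cls_eq[OF GD])
      have t1: "Tf a (int un) (br e (int m)) = br (a * e) (u * int m)"
        unfolding un_def using T_br_nat[OF False, of a e "int m"] by simp
      have t2: "Tf e (int m) y = br (e * a) (int m * u)" using yb T_br by simp
      have "Tf a (int un) (br e (int m)) = Tf e (int m) y" using t1 t2 by (simp add: mult.commute)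
      then show ?thesis using eq W by (metis image_eqI)
    qed
  qed
qed

lemma Pt:
  assumes e: "e = 1 \<or> e = -1" and m: "m \<ge> 1" "\<not> p dvd m" and W: "br e (int m) \<in> W0"
    and y: "y \<in> Gc p"
  shows "Tf e (int m) y \<in> cls y"
proof (cases "\<bar>fst y\<bar> \<le> 1")
  case True then show ?thesis using Pt1[OF e m W y] by simp
next
  case False
  define a where "a = fst y"
  define u where "u = uc y"
  have yb: "y = br a u" unfolding a_def u_def using br_uc[OF y] by simp
  define s where "s = sgn a"
  have s: "s = 1 \<or> s = -1" using False a_def s_def by (auto simp: sgn_if)
  obtain k where k: "\<bar>a\<bar> = int (Suc k)"
  proof -
    have "\<bar>a\<bar> = int (Suc (nat \<bar>a\<bar> - 1))" using False a_def by simp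
    then show ?thesis by (rule that)
  qed
  have as: "a = s * int (Suc k)" using k s_def by (metis abs_mult_sgn mult.commute)
  have "Tf e (int m) (br s u) \<in> cls (br s u)" using Pt1[OF e m W br_Gc] s by auto
  then have "br (e * s) (int m * u) \<in> cls (br s u)" using T_br by simp
  moreover have es: "e * s = 1 \<or> e * s = -1" using e s by auto
  ultimately have "br (e * s * int (Suc k)) (int m * u) \<in> cls (br (s * int (Suc k)) u)"
    using LI[OF s es] by blast
  then show ?thesis using yb as T_br by (simp add: mult.assoc)
qed

lemma KER:
  assumes e: "e = 1 \<or> e = -1" and m: "m \<ge> 1" "\<not> p dvd m" and W: "br e (int m) \<in> W0"
  shows "\<forall>E\<in>D. Tf e (int m) ` E = E"
proof
  fix E assume E: "E \<in> D"
  have sub: "Tf e (int m) ` E \<subseteq> E"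
  proof
    fix z assume "z \<in> Tf e (int m) ` E"
    then obtain y where y: "y \<in> E" "z = Tf e (int m) y" by blast
    have yG: "y \<in> Gc p" using y E cls_Gc by blast
    have "cls y = E" using cls_eq[OF E y(1)] .
    then show "z \<in> E" using Pt[OF e m W yG] y by simp
  qed
  have "card (Tf e (int m) ` E) = card E"
    using card_image[OF inj_on_subset[OF T_inj[OF e int_dvd_nat[OF m(2)]] cls_Gc[OF E]]] .
  then show "Tf e (int m) ` E = E" using card_subset_eq[OF cls_fin[OF E] sub] by simp
qed

end


context SRC2
begin

lemma SS: "y \<in> Gc p \<Longrightarrow> S (S y) = y"
  using T_comp T_one by simp

lemma SS_img: "W \<subseteq> Gc p \<Longrightarrow> S ` S ` W = W"
proof -
  assume "W \<subseteq> Gc p"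
  then have "\<forall>y\<in>W. S (S y) = y" using SS by blast
  then show ?thesis by (simp add: image_image)
qed

lemma Tneg: "y \<in> Gc p \<Longrightarrow> Tf (-1) m y = S (Tf 1 m y)"
  using T_comp by simp

lemma lev1_img: "lev1 X \<Longrightarrow> X \<subseteq> Gc p \<Longrightarrow> e = 1 \<or> e = -1 \<Longrightarrow> lev1 (Tf e m ` X)"
proof -
  assume a: "lev1 X" "X \<subseteq> Gc p" "e = 1 \<or> e = -1"
  show ?thesis unfolding lev1_def
  proof
    fix z assume "z \<in> Tf e m ` X"
    then obtain y where y: "y \<in> X" "z = Tf e m y" by blast
    have "fst z = e * fst y" using y br_uc[of y] a(2) T_br by (metis fst_br subsetD)
    then show "\<bar>fst z\<bar> = 1" using a(1,3) y unfolding lev1_def by (auto simp: abs_mult)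
  qed
qed

lemma mfac:
  assumes "a \<ge> 1" "\<not> p dvd a" "b \<ge> 1" "\<not> p dvd b"
  shows "(a * b) mod p \<ge> 1" "(a * b) mod p < p" "\<not> p dvd ((a * b) mod p)"
proof -
  have "\<not> p dvd a * b" using assms pr prime_dvd_mult_iff by blast
  then have nz: "(a * b) mod p \<noteq> 0" by (simp add: dvd_eq_mod_eq_0)
  then show "(a * b) mod p \<ge> 1" by simp
  show "(a * b) mod p < p" using p_pos by simp
  show "\<not> p dvd ((a * b) mod p)" using nz p_pos by (simp add: dvd_eq_mod_eq_0)
qed

lemma TR0:
  assumes E: "E \<in> D" and g: "g \<in> E" "fst g = 0" and h: "h \<in> E"
  shows "\<exists>e m. (e = 1 \<or> e = -1) \<and> m \<ge> 1 \<and> m < p \<and> Tf e (int m) g = h \<and> br e (int m) \<in> W0"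
proof -
  have gG: "g \<in> Gc p" using g E cls_Gc by blast
  have hG: "h \<in> Gc p" using h E cls_Gc by blast
  have Ecl: "cls g = E" using cls_eq[OF E g(1)] .
  have fh: "fst h = 0" using lev[OF E g(1) h] g(2) by simp
  define u where "u = uc g"
  define u' where "u' = uc h"
  have gb: "g = br 0 u" unfolding u_def using br_uc[OF gG] g(2) by simp
  have hb: "h = br 0 u'" unfolding u'_def using br_uc[OF hG] fh by simp
  have id11: "Tf 1 1 g = g" using T_one gG by simp
  show ?thesis
  proof (cases "u mod ip = 0")
    case True
    then have "g = (0, 0)" using gb br00 by simp
    then have "E = {(0, 0)}" using Ecl zero_cls by simp
    then have "h = g" using h \<open>g = (0, 0)\<close> by simp
    then show ?thesis using id11 W0D(2) p_gt1 by (intro exI[of _ 1] exI[of _ 1]) simp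
  next
    case False
    have u'nz: "u' mod ip \<noteq> 0"
    proof
      assume "u' mod ip = 0"
      then have "h = (0, 0)" using hb br00 by simp
      then have "E = {(0, 0)}" using cls_eq[OF E h] zero_cls by simp
      then show False using g gb br00 False by simp
    qed
    define un where "un = nat (u mod ip)"
    define un' where "un' = nat (u' mod ip)"
    have un: "un \<ge> 1" "\<not> p dvd un" "int un = u mod ip" using unat[OF False] un_def by auto
    have un': "un' \<ge> 1" "\<not> p dvd un'" "int un' = u' mod ip" using unat[OF u'nz] un'_def by auto
    obtain w1 where w1: "w1 \<ge> 1" "\<not> p dvd w1" "(int un * int w1) mod ip = 1" "(int w1 * int un) mod ip = 1"
      using inv_nat[OF un(1,2)] by blast
    define m where "m = (un' * w1) mod p"
    have m: "m \<ge> 1" "m < p" "\<not> p dvd m" using mfac[OF un'(1,2) w1(1,2)] m_def by auto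
    have im: "int m = (int un' * int w1) mod ip" unfolding m_def by (simp add: of_nat_mod)
    have c1: "(int w1 * u) mod ip = 1 mod ip"
    proof -
      have "(int w1 * u) mod ip = (int w1 * (u mod ip)) mod ip" by (simp add: mod_mult_right_eq)
      also have "\<dots> = 1" using un(3) w1(4) by simp
      finally show ?thesis using ip_gt1 by simp
    qed
    have c2: "(int w1 * u') mod ip = int m mod ip"
    proof -
      have "(int w1 * u') mod ip = (int w1 * (u' mod ip)) mod ip" by (simp add: mod_mult_right_eq)
      also have "\<dots> = (int un' * int w1) mod ip" using un'(3) by (simp add: mult.commute)
      finally show ?thesis using im by simp
    qed
    have c3: "(int m * u) mod ip = u' mod ip"
    proof -
      have "(int m * u) mod ip = ((int un' * int w1) * u) mod ip" using im by (simp add: mod_mult_left_eq)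
      also have "\<dots> = (int un' * (int w1 * u)) mod ip" by (simp add: mult.assoc)
      also have "\<dots> = (int un' * ((int w1 * u) mod ip)) mod ip" by (simp add: mod_mult_right_eq)
      also have "\<dots> = int un' mod ip" using c1 ip_gt1 by simp
      also have "\<dots> = u' mod ip" using un'(3) by simp
      finally show ?thesis .
    qed
    have Tg: "Tf e (int m) g = h" for e
      using gb hb T_br br_eq c3 by simp
    have ET: "Tf 1 (int w1) ` E = T1"
    proof -
      have lE: "lv01 E" using lev0_cls[OF gG g(2)] Ecl unfolding lv01_def by simp
      have GD: "Tf 1 (int w1) ` E \<in> D" using GT[OF E lE _ w1(1,2)] by simp
      have "Tf 1 (int w1) g = br 0 1" using gb T_br br_eq c1 by simp
      then have "br 0 1 \<in> Tf 1 (int w1) ` E" using g(1) by (metis image_eqI)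
      then show ?thesis using cls_eq[OF GD] by simp
    qed
    have bmT: "br 0 (int m) \<in> T1"
    proof -
      have "Tf 1 (int w1) h = br 0 (int m)" using hb T_br br_eq c2 by simp
      then show ?thesis using ET h by (metis image_eqI)
    qed
    define X where "X = Tf 1 (int m) ` W0"
    have XD: "X \<in> D" unfolding X_def using GT[OF W0D(1) lv01_W0 _ m(1,3)] by simp
    have lX: "lev1 X" unfolding X_def using lev1_img[OF lev1_W0 cls_Gc[OF W0D(1)]] by simp
    have bX: "br 1 (int m) \<in> X" unfolding X_def using W0D(2) T_br by (metis image_eqI mult_1 mult_1_right)
    have "br 0 (uc (br 1 (int m))) \<in> cls (br 0 (uc (br 1 1)))" using bmT uc_br0 by simp
    then have "X = W0 \<or> X = S ` W0" using DI[OF XD lX W0D(1) lev1_W0 bX W0D(2)] by simp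
    then show ?thesis
    proof
      assume "X = W0"
      then show ?thesis using bX m Tg by (intro exI[of _ 1] exI[of _ m]) simp
    next
      assume XS: "X = S ` W0"
      have "S (br 1 (int m)) \<in> S ` X" using bX by blast
      then have "br (-1) (int m) \<in> W0" using XS SS_img[OF cls_Gc[OF W0D(1)]] S_br by simp
      then show ?thesis using m Tg by (intro exI[of _ "-1"] exI[of _ m]) simp
    qed
  qed
qed


lemma MC:
  assumes u: "u mod ip \<noteq> 0" and u': "u' mod ip \<noteq> 0"
  obtains w1 m where "w1 \<ge> 1" "\<not> p dvd w1" "m \<ge> 1" "m < p" "\<not> p dvd m"
    "(int w1 * u) mod ip = 1 mod ip" "(int w1 * u') mod ip = int m mod ip" "(int m * u) mod ip = u' mod ip"
proof -
  define un where "un = nat (u mod ip)"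
  define un' where "un' = nat (u' mod ip)"
  have un: "un \<ge> 1" "\<not> p dvd un" "int un = u mod ip" using unat[OF u] un_def by auto
  have un': "un' \<ge> 1" "\<not> p dvd un'" "int un' = u' mod ip" using unat[OF u'] un'_def by auto
  obtain w1 where w1: "w1 \<ge> 1" "\<not> p dvd w1" "(int un * int w1) mod ip = 1" "(int w1 * int un) mod ip = 1"
    using inv_nat[OF un(1,2)] by blast
  define m where "m = (un' * w1) mod p"
  have m: "m \<ge> 1" "m < p" "\<not> p dvd m" using mfac[OF un'(1,2) w1(1,2)] m_def by auto
  have im: "int m = (int un' * int w1) mod ip" unfolding m_def by (simp add: of_nat_mod)
  have c1: "(int w1 * u) mod ip = 1 mod ip"
  proof -
    have "(int w1 * u) mod ip = (int w1 * (u mod ip)) mod ip" by (simp add: mod_mult_right_eq)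
    also have "\<dots> = 1" using un(3) w1(4) by simp
    finally show ?thesis using ip_gt1 by simp
  qed
  have c2: "(int w1 * u') mod ip = int m mod ip"
  proof -
    have "(int w1 * u') mod ip = (int w1 * (u' mod ip)) mod ip" by (simp add: mod_mult_right_eq)
    also have "\<dots> = (int un' * int w1) mod ip" using un'(3) by (simp add: mult.commute)
    finally show ?thesis using im by simp
  qed
  have c3: "(int m * u) mod ip = u' mod ip"
  proof -
    have "(int m * u) mod ip = ((int un' * int w1) * u) mod ip" using im by (simp add: mod_mult_left_eq)
    also have "\<dots> = (int un' * (int w1 * u)) mod ip" by (simp add: mult.assoc)
    also have "\<dots> = (int un' * ((int w1 * u) mod ip)) mod ip" by (simp add: mod_mult_right_eq)
    also have "\<dots> = int un' mod ip" using c1 ip_gt1 by simp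
    also have "\<dots> = u' mod ip" using un'(3) by simp
    finally show ?thesis .
  qed
  show ?thesis using that[OF w1(1,2) m c1 c2 c3] .
qed

lemma EXN: "\<exists>m. m \<ge> 1 \<and> m < p \<and> br (-1) (int m) \<in> W0"
proof -
  have SWD: "S ` W0 \<in> D" using GS[OF W0D(1) lev1_W0] .
  show ?thesis
  proof (cases "S ` W0 = W0")
    case True
    have "S (br 1 1) \<in> S ` W0" using W0D(2) by blast
    then have "br (-1) 1 \<in> W0" using True S_br by simp
    then show ?thesis using p_gt1 by (intro exI[of _ 1]) simp
  next
    case False
    obtain y where y: "y \<in> W0" "fst y = - 1" using lev2[OF W0D] by auto
    have yG: "y \<in> Gc p" using y cls_Gc[OF W0D(1)] by blast
    define t where "t = uc y"
    have yb: "y = br (-1) t" unfolding t_def using br_uc[OF yG] y(2) by simp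
    have tT: "br 0 t \<in> T1" using D1[OF W0D(1) lev1_W0[unfolded lev1_def] W0D(2) y(1)] uc_br0 t_def by simp
    have tnz: "t mod ip \<noteq> 0"
    proof
      assume "t mod ip = 0"
      then have "br 0 t = (0, 0)" using br00 by simp
      then have "(0, 0) \<in> T1" using tT by simp
      then have "T1 = {(0, 0)}" using cls_eq[OF T1D(1)] zero_cls by metis
      then show False using T1D(2) br00 ip_gt1 by auto
    qed
    define m where "m = nat (t mod ip)"
    have m: "m \<ge> 1" "\<not> p dvd m" "int m = t mod ip" using unat[OF tnz] m_def by auto
    have mp: "m < p" using m(3) ip_gt1 by (smt (verit) of_nat_less_iff pos_mod_bound)
    define X where "X = Tf 1 (int m) ` W0"
    have XD: "X \<in> D" unfolding X_def using GT[OF W0D(1) lv01_W0 _ m(1,2)] by simp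
    have lX: "lev1 X" unfolding X_def using lev1_img[OF lev1_W0 cls_Gc[OF W0D(1)]] by simp
    have bX: "br 1 (int m) \<in> X" unfolding X_def using W0D(2) T_br by (metis image_eqI mult_1 mult_1_right)
    have bmt: "br 0 (int m) = br 0 t" "br 1 (int m) = br 1 t" "br (-1) (int m) = br (-1) t"
      using m(3) br_eq by auto
    have "br 0 (uc (br 1 (int m))) \<in> cls (br 0 (uc (br 1 1)))" using tT bmt uc_br0 by simp
    then have XW: "X = W0 \<or> X = S ` W0" using DI[OF XD lX W0D(1) lev1_W0 bX W0D(2)] by simp
    have bS: "br 1 (int m) \<in> S ` W0"
    proof -
      have "S y = br 1 t" using yb S_br by simp
      then show ?thesis using y(1) bmt by (metis image_eqI)
    qed
    have "X = S ` W0"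
    proof (rule ccontr)
      assume "X \<noteq> S ` W0"
      then have "X = W0" using XW by simp
      then have "S ` W0 = W0" using cls_disj[OF SWD W0D(1) bS] bX by simp
      then show False using False by simp
    qed
    then have "S (br 1 (int m)) \<in> S ` S ` W0" using bX by blast
    then have "br (-1) (int m) \<in> W0" using SS_img[OF cls_Gc[OF W0D(1)]] S_br by simp
    then show ?thesis using m mp by blast
  qed
qed

lemma TR1:
  assumes E: "E \<in> D" and g: "g \<in> E" "\<bar>fst g\<bar> = 1" and h: "h \<in> E"
  shows "\<exists>e m. (e = 1 \<or> e = -1) \<and> m \<ge> 1 \<and> m < p \<and> Tf e (int m) g = h \<and> br e (int m) \<in> W0"
proof -
  have gG: "g \<in> Gc p" using g E cls_Gc by blast
  have hG: "h \<in> Gc p" using h E cls_Gc by blast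
  have Ecl: "cls g = E" using cls_eq[OF E g(1)] .
  define a where "a = fst g"
  define b where "b = fst h"
  have a: "a = 1 \<or> a = -1" using g(2) a_def by auto
  have ba: "b = a \<or> b = - a" using lev[OF E g(1) h] a_def b_def by simp
  have b: "b = 1 \<or> b = -1" using a ba by auto
  define u where "u = uc g"
  define u' where "u' = uc h"
  have gb: "g = br a u" unfolding u_def a_def using br_uc[OF gG] by simp
  have hb: "h = br b u'" unfolding u'_def b_def using br_uc[OF hG] by simp
  have id11: "Tf 1 1 g = g" using T_one gG by simp
  show ?thesis
  proof (cases "u mod ip = 0")
    case True
    then have g0: "g = br a 0" using gb br_eq by simp
    then have EC: "E = {br 1 0, br (-1) 0}" using Ecl C_cls[OF a] by simp
    have "h = br 1 0 \<or> h = br (-1) 0" using h EC by simp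
    then have "h = br (fst h) 0" by auto
    then have h0: "h = br b 0" unfolding b_def .
    show ?thesis
    proof (cases "b = a")
      case True
      then have "h = g" using g0 h0 by simp
      then show ?thesis using id11 W0D(2) p_gt1 by (intro exI[of _ 1] exI[of _ 1]) simp
    next
      case False
      then have bma: "b = - a" using ba by simp
      obtain m where m: "m \<ge> 1" "m < p" "br (-1) (int m) \<in> W0" using EXN by blast
      have "Tf (-1) (int m) g = h" using g0 h0 bma T_br br_eq by simp
      then show ?thesis using m by (intro exI[of _ "-1"] exI[of _ m]) simp
    qed
  next
    case False
    have u'nz: "u' mod ip \<noteq> 0"
    proof
      assume "u' mod ip = 0"
      then have "h = br b 0" using hb br_eq by simp
      then have "E = {br 1 0, br (-1) 0}" using cls_eq[OF E h] C_cls[OF b] by simp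
      then have "g = br 1 0 \<or> g = br (-1) 0" using g by auto
      then show False using gb br_eq False by auto
    qed
    obtain w1 m where wm: "w1 \<ge> 1" "\<not> p dvd w1" "m \<ge> 1" "m < p" "\<not> p dvd m"
      "(int w1 * u) mod ip = 1 mod ip" "(int w1 * u') mod ip = int m mod ip" "(int m * u) mod ip = u' mod ip"
      using MC[OF False u'nz] by blast
    define e where "e = a * b"
    have e: "e = 1 \<or> e = -1" unfolding e_def using a b by auto
    have aa: "a * a = 1" using a by auto
    have "e * a = b" unfolding e_def using aa by (metis mult.assoc mult.commute mult_1)
    then have Tg: "Tf e (int m) g = h" using gb hb T_br br_eq wm(8) by simp
    have lE: "lv01 E" using lev1_cls[OF gG g(2)] Ecl unfolding lv01_def lev1_def by simp
    have GD: "Tf a (int w1) ` E \<in> D" using GT[OF E lE a wm(1,2)] .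
    have "Tf a (int w1) g = br 1 1" using gb T_br br_eq wm(6) aa by simp
    then have "br 1 1 \<in> Tf a (int w1) ` E" using g(1) by (metis image_eqI)
    then have GW: "Tf a (int w1) ` E = W0" using cls_eq[OF GD] by simp
    have "Tf a (int w1) h = br e (int m)" using hb T_br br_eq wm(7) e_def by simp
    then have "br e (int m) \<in> W0" using GW h by (metis image_eqI)
    then show ?thesis using e wm Tg by blast
  qed
qed

lemma TRANS:
  assumes E: "E \<in> D" and g: "g \<in> E" and h: "h \<in> E"
  shows "\<exists>e m. (e = 1 \<or> e = -1) \<and> m \<ge> 1 \<and> m < p \<and> Tf e (int m) g = h \<and> br e (int m) \<in> W0"
proof -
  have gG: "g \<in> Gc p" using g E cls_Gc by blast
  have hG: "h \<in> Gc p" using h E cls_Gc by blast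
  consider "fst g = 0" | "\<bar>fst g\<bar> = 1" | "\<bar>fst g\<bar> \<ge> 2" by linarith
  then show ?thesis
  proof cases
    case 1 then show ?thesis using TR0[OF E g 1 h] by blast
  next
    case 2 then show ?thesis using TR1[OF E g 2 h] by blast
  next
    case 3
    define a where "a = fst g"
    define b where "b = fst h"
    define u where "u = uc g"
    define u' where "u' = uc h"
    have gb: "g = br a u" unfolding u_def a_def using br_uc[OF gG] by simp
    have hb: "h = br b u'" unfolding u'_def b_def using br_uc[OF hG] by simp
    define s where "s = sgn a"
    have s: "s = 1 \<or> s = -1" using 3 a_def s_def by (auto simp: sgn_if)
    obtain k where k: "\<bar>a\<bar> = int (Suc k)"
    proof -
      have "\<bar>a\<bar> = int (Suc (nat \<bar>a\<bar> - 1))" using 3 a_def by simp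
      then show ?thesis by (rule that)
    qed
    have as: "a = s * int (Suc k)" using k s_def by (metis abs_mult_sgn mult.commute)
    have ba: "b = a \<or> b = - a" using lev[OF E g h] a_def b_def by simp
    define s' where "s' = (if b = a then s else - s)"
    have s': "s' = 1 \<or> s' = -1" using s s'_def by auto
    have bs: "b = s' * int (Suc k)" using ba as s'_def by auto
    have "h \<in> cls g" using cls_eq[OF E g] h by simp
    then have "br (s' * int (Suc k)) u' \<in> cls (br (s * int (Suc k)) u)" using gb hb as bs by simp
    then have h1: "br s' u' \<in> cls (br s u)" using LI[OF s s'] by blast
    have E1: "cls (br s u) \<in> D" "br s u \<in> cls (br s u)" using cls_in[OF br_Gc] by auto
    have "\<bar>fst (br s u)\<bar> = 1" using s by auto
    then obtain e m where em: "e = 1 \<or> e = -1" "m \<ge> 1" "m < p" "Tf e (int m) (br s u) = br s' u'"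
      "br e (int m) \<in> W0" using TR1[OF E1(1) E1(2) _ h1] by blast
    have "br (e * s) (int m * u) = br s' u'" using em(4) T_br by simp
    then have "e * s = s'" "(int m * u) mod ip = u' mod ip" using br_eq by auto
    then have "Tf e (int m) g = h" using gb hb as bs T_br br_eq by (simp add: mult.assoc)
    then show ?thesis using em by blast
  qed
qed

lemma case2: "automorphic F p D"
proof (rule automorphic_intro)
  show "\<forall>E\<in>D. \<forall>g\<in>E. \<forall>h\<in>E. \<exists>\<sigma>\<in>Hset p D. \<sigma> g = h"
  proof (intro ballI)
    fix E g h assume E: "E \<in> D" and g: "g \<in> E" and h: "h \<in> E"
    obtain e m where em: "e = 1 \<or> e = -1" "m \<ge> 1" "m < p" "Tf e (int m) g = h" "br e (int m) \<in> W0"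
      using TRANS[OF E g h] by blast
    have mp: "\<not> p dvd m" using em(2,3) by (auto dest: dvd_imp_le)
    have K: "\<forall>E\<in>D. Af p e (((e - int m) * i) mod ip) (int m) ` E = E"
      using KER[OF em(1) em(2) mp em(5)] unfolding Tf_def .
    have H: "Ar p e (((e - int m) * i) mod ip) (int m) \<in> Hset p D"
    proof (rule HsetI)
      show "e \<in> {1, -1}" using em(1) by auto
      show "((e - int m) * i) mod ip \<in> {0..<ip}" using ip_gt1 by simp
      show "int m \<in> {1..<ip}" using em(2,3) by simp
    qed (rule K)
    have gG: "g \<in> Gc p" using g E cls_Gc by blast
    have "Ar p e (((e - int m) * i) mod ip) (int m) g = h"
      using em(4) gG unfolding Ar_def Tf_def by simp
    then show "\<exists>\<sigma>\<in>Hset p D. \<sigma> g = h" using H by blast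
  qed
qed

end


theorem corollary3p6:
  fixes F :: "'a::field_char_0 itself" and p :: nat and D :: "(int \<times> int) set set"
  assumes "prime p"
    and "schur_classes F p D"
    and "phi_classes D = sym_classes"
    and "\<exists>C\<in>D. card C = 2 \<and> C \<subseteq> ({1} \<times> {0..<int p}) \<union> ({-1} \<times> {0..<int p})"
  shows "automorphic F p D"
proof -
  interpret SR F p D using assms(1-3) by unfold_locales
  obtain C where C: "C \<in> D" "card C = 2" "C \<subseteq> ({1} \<times> {0..<int p}) \<union> ({-1} \<times> {0..<int p})"
    using assms(4) by blast
  obtain t where t: "fst ` C = {t, -t}" using cls_level[OF C(1)] by blast
  have "t \<in> fst ` C" using t by simp
  then have "t = 1 \<or> t = -1" using C(3) by auto
  then have "1 \<in> fst ` C" "-1 \<in> fst ` C" using t by auto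
  then obtain i j where i: "(1, i) \<in> C" and j: "(-1, j) \<in> C" by force
  have ir: "0 \<le> i" "i < int p" using i C(3) by auto
  have jr: "0 \<le> j" "j < int p" using j C(3) by auto
  have sub: "{(1, i), (-1, j)} \<subseteq> C" using i j by simp
  have "card {(1::int, i), (-1, j)} = 2" by simp
  then have Ceq: "{(1, i), (-1, j)} = C" using card_subset_eq[OF cls_fin[OF C(1)] sub] C(2) by simp
  interpret SRC F p D i j using Ceq C(1) ir jr by unfold_locales auto
  show ?thesis
  proof (cases "(i + j) mod int p = 0")
    case True
    interpret SRC2 F p D i j using True by unfold_locales
    show ?thesis by (rule case2)
  next
    case False
    then show ?thesis by (rule case1)
  qed
qed

end
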